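(* Let $\mathcal X$ be a linear Abelian category over a field $\mathbb F$ and let $L\subseteq\mathbb Z$ be any subset. Then the category of tempered $L$-persistence objects in $\mathcal X$ is Krull–Schmidt.
   Context: An additive category is linear over $\mathbb F$ if each Hom-set is a finite-dimensional $\mathbb F$-vector space and composition is bilinear. For $L\subseteq\mathbb Z$, an $L$-persistence object in $\mathcal X$ is a family of objects $(X_p)_{p\in\mathbb Z}$ together with, for each $p$, a morphism $X_p\to X_{p-1}$ if $p\in L$ and a morphism $X_{p-1}\to X_p$ if $p\notin L$. A morphism of $L$-persistence objects is a family of morphisms $f_p:X_p\to X'_p$ making all resulting squares commute. It is tempered if all but finitely many of its arrows are isomorphisms. An object is indecomposable if it is nonzero and not isomorphic to a direct sum of two nonzero objects. A ring is local if $1\ne0$ and for each $f$, if $f$ is not invertible then $1-f$ is invertible. An additive category is Krull–Schmidt if every object is isomorphic to a finite direct sum of indecomposables and every indecomposable has a local endomorphism ring. *)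

theory Defs
  imports Main
begin

text \<open>A (small) category presented by objects, morphisms, domain/codomain, composition
  and identities, together with F-linear structure on the Hom-sets.
  cComp C g f denotes g after f.\<close>

record ('o, 'm, 'k) lcat =
  cObj  :: "'o set"
  cMor  :: "'m set"
  cDom  :: "'m \<Rightarrow> 'o"
  cCod  :: "'m \<Rightarrow> 'o"
  cComp :: "'m \<Rightarrow> 'm \<Rightarrow> 'm"
  cId   :: "'o \<Rightarrow> 'm"
  cAdd  :: "'m \<Rightarrow> 'm \<Rightarrow> 'm"
  cZero :: "'o \<Rightarrow> 'o \<Rightarrow> 'm"
  cSmul :: "'k \<Rightarrow> 'm \<Rightarrow> 'm"

definition hom :: "('o, 'm, 'k) lcat \<Rightarrow> 'o \<Rightarrow> 'o \<Rightarrow> 'm set" where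
  "hom C X Y = {f \<in> cMor C. cDom C f = X \<and> cCod C f = Y}"

definition is_category :: "('o, 'm, 'k) lcat \<Rightarrow> bool" where
  "is_category C \<longleftrightarrow>
     (\<forall>f\<in>cMor C. cDom C f \<in> cObj C \<and> cCod C f \<in> cObj C) \<and>
     (\<forall>X\<in>cObj C. cId C X \<in> hom C X X) \<and>
     (\<forall>X\<in>cObj C. \<forall>Y\<in>cObj C. \<forall>Z\<in>cObj C. \<forall>f\<in>hom C X Y. \<forall>g\<in>hom C Y Z.
        cComp C g f \<in> hom C X Z) \<and>
     (\<forall>W\<in>cObj C. \<forall>X\<in>cObj C. \<forall>Y\<in>cObj C. \<forall>Z\<in>cObj C.
        \<forall>f\<in>hom C W X. \<forall>g\<in>hom C X Y. \<forall>h\<in>hom C Y Z.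
        cComp C h (cComp C g f) = cComp C (cComp C h g) f) \<and>
     (\<forall>X\<in>cObj C. \<forall>Y\<in>cObj C. \<forall>f\<in>hom C X Y.
        cComp C f (cId C X) = f \<and> cComp C (cId C Y) f = f)"

definition lin_comb :: "('o, 'm, 'k) lcat \<Rightarrow> 'o \<Rightarrow> 'o \<Rightarrow> 'm list \<Rightarrow> 'k list \<Rightarrow> 'm" where
  "lin_comb C X Y bs cs =
     foldr (\<lambda>(c, b) acc. cAdd C (cSmul C c b) acc) (zip cs bs) (cZero C X Y)"

definition linear_homs :: "('o, 'm, 'k::field) lcat \<Rightarrow> bool" where
  "linear_homs C \<longleftrightarrow> (\<forall>X\<in>cObj C. \<forall>Y\<in>cObj C.
     cZero C X Y \<in> hom C X Y \<and>
     (\<forall>f\<in>hom C X Y. \<forall>g\<in>hom C X Y. cAdd C f g \<in> hom C X Y) \<and>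
     (\<forall>a. \<forall>f\<in>hom C X Y. cSmul C a f \<in> hom C X Y) \<and>
     (\<forall>f\<in>hom C X Y. \<forall>g\<in>hom C X Y. \<forall>h\<in>hom C X Y.
        cAdd C (cAdd C f g) h = cAdd C f (cAdd C g h)) \<and>
     (\<forall>f\<in>hom C X Y. \<forall>g\<in>hom C X Y. cAdd C f g = cAdd C g f) \<and>
     (\<forall>f\<in>hom C X Y. cAdd C f (cZero C X Y) = f) \<and>
     (\<forall>f\<in>hom C X Y. cAdd C f (cSmul C (-1) f) = cZero C X Y) \<and>
     (\<forall>f\<in>hom C X Y. cSmul C 1 f = f) \<and>
     (\<forall>a b. \<forall>f\<in>hom C X Y. cSmul C a (cSmul C b f) = cSmul C (a * b) f) \<and>
     (\<forall>a b. \<forall>f\<in>hom C X Y. cSmul C (a + b) f = cAdd C (cSmul C a f) (cSmul C b f)) \<and>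
     (\<forall>a. \<forall>f\<in>hom C X Y. \<forall>g\<in>hom C X Y.
        cSmul C a (cAdd C f g) = cAdd C (cSmul C a f) (cSmul C a g)) \<and>
     (\<exists>bs. set bs \<subseteq> hom C X Y \<and>
        (\<forall>f\<in>hom C X Y. \<exists>cs. length cs = length bs \<and> f = lin_comb C X Y bs cs)))"

definition bilinear_comp :: "('o, 'm, 'k) lcat \<Rightarrow> bool" where
  "bilinear_comp C \<longleftrightarrow> (\<forall>X\<in>cObj C. \<forall>Y\<in>cObj C. \<forall>Z\<in>cObj C.
     \<forall>f\<in>hom C X Y. \<forall>f'\<in>hom C X Y. \<forall>g\<in>hom C Y Z. \<forall>g'\<in>hom C Y Z. \<forall>a.
       cComp C g (cAdd C f f') = cAdd C (cComp C g f) (cComp C g f') \<and>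
       cComp C (cAdd C g g') f = cAdd C (cComp C g f) (cComp C g' f) \<and>
       cComp C g (cSmul C a f) = cSmul C a (cComp C g f) \<and>
       cComp C (cSmul C a g) f = cSmul C a (cComp C g f))"

definition is_zero_obj :: "('o, 'm, 'k) lcat \<Rightarrow> 'o \<Rightarrow> bool" where
  "is_zero_obj C Z \<longleftrightarrow> Z \<in> cObj C \<and>
     (\<forall>X\<in>cObj C. (\<exists>!f. f \<in> hom C Z X) \<and> (\<exists>!f. f \<in> hom C X Z))"

definition biprod :: "('o, 'm, 'k) lcat \<Rightarrow> 'o \<Rightarrow> 'o \<Rightarrow> 'o \<Rightarrow> 'm \<Rightarrow> 'm \<Rightarrow> 'm \<Rightarrow> 'm \<Rightarrow> bool" where
  "biprod C A B S i1 i2 p1 p2 \<longleftrightarrow> A \<in> cObj C \<and> B \<in> cObj C \<and> S \<in> cObj C \<and>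
     i1 \<in> hom C A S \<and> i2 \<in> hom C B S \<and> p1 \<in> hom C S A \<and> p2 \<in> hom C S B \<and>
     cComp C p1 i1 = cId C A \<and> cComp C p2 i2 = cId C B \<and>
     cComp C p2 i1 = cZero C A B \<and> cComp C p1 i2 = cZero C B A \<and>
     cAdd C (cComp C i1 p1) (cComp C i2 p2) = cId C S"

definition additive :: "('o, 'm, 'k) lcat \<Rightarrow> bool" where
  "additive C \<longleftrightarrow> (\<exists>Z. is_zero_obj C Z) \<and>
     (\<forall>A\<in>cObj C. \<forall>B\<in>cObj C. \<exists>S i1 i2 p1 p2. biprod C A B S i1 i2 p1 p2)"

definition is_kernel :: "('o, 'm, 'k) lcat \<Rightarrow> 'm \<Rightarrow> 'm \<Rightarrow> bool" where
  "is_kernel C f k \<longleftrightarrow> f \<in> cMor C \<and> k \<in> cMor C \<and> cCod C k = cDom C f \<and>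
     cComp C f k = cZero C (cDom C k) (cCod C f) \<and>
     (\<forall>g\<in>cMor C. cCod C g = cDom C f \<and> cComp C f g = cZero C (cDom C g) (cCod C f) \<longrightarrow>
        (\<exists>!h. h \<in> hom C (cDom C g) (cDom C k) \<and> cComp C k h = g))"

definition is_cokernel :: "('o, 'm, 'k) lcat \<Rightarrow> 'm \<Rightarrow> 'm \<Rightarrow> bool" where
  "is_cokernel C f c \<longleftrightarrow> f \<in> cMor C \<and> c \<in> cMor C \<and> cDom C c = cCod C f \<and>
     cComp C c f = cZero C (cDom C f) (cCod C c) \<and>
     (\<forall>g\<in>cMor C. cDom C g = cCod C f \<and> cComp C g f = cZero C (cDom C f) (cCod C g) \<longrightarrow>
        (\<exists>!h. h \<in> hom C (cCod C c) (cCod C g) \<and> cComp C h c = g))"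

definition is_mono :: "('o, 'm, 'k) lcat \<Rightarrow> 'm \<Rightarrow> bool" where
  "is_mono C m \<longleftrightarrow> m \<in> cMor C \<and> (\<forall>g\<in>cMor C. \<forall>h\<in>cMor C.
     cCod C g = cDom C m \<and> cCod C h = cDom C m \<and> cDom C g = cDom C h \<and>
     cComp C m g = cComp C m h \<longrightarrow> g = h)"

definition is_epi :: "('o, 'm, 'k) lcat \<Rightarrow> 'm \<Rightarrow> bool" where
  "is_epi C e \<longleftrightarrow> e \<in> cMor C \<and> (\<forall>g\<in>cMor C. \<forall>h\<in>cMor C.
     cDom C g = cCod C e \<and> cDom C h = cCod C e \<and> cCod C g = cCod C h \<and>
     cComp C g e = cComp C h e \<longrightarrow> g = h)"

definition is_iso :: "('o, 'm, 'k) lcat \<Rightarrow> 'm \<Rightarrow> bool" where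
  "is_iso C f \<longleftrightarrow> f \<in> cMor C \<and> (\<exists>g\<in>hom C (cCod C f) (cDom C f).
     cComp C g f = cId C (cDom C f) \<and> cComp C f g = cId C (cCod C f))"

definition linear_abelian_cat :: "('o, 'm, 'k::field) lcat \<Rightarrow> bool" where
  "linear_abelian_cat C \<longleftrightarrow> is_category C \<and> linear_homs C \<and> bilinear_comp C \<and> additive C \<and>
     (\<forall>f\<in>cMor C. \<exists>k. is_kernel C f k) \<and>
     (\<forall>f\<in>cMor C. \<exists>c. is_cokernel C f c) \<and>
     (\<forall>m. is_mono C m \<longrightarrow> (\<exists>f. is_kernel C f m)) \<and>
     (\<forall>e. is_epi C e \<longrightarrow> (\<exists>f. is_cokernel C f e))"

type_synonym ('o, 'm) pobj = "(int \<Rightarrow> 'o) \<times> (int \<Rightarrow> 'm)"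
type_synonym ('o, 'm) pmor = "('o, 'm) pobj \<times> ('o, 'm) pobj \<times> (int \<Rightarrow> 'm)"

definition pers_obj :: "('o, 'm, 'k) lcat \<Rightarrow> int set \<Rightarrow> ('o, 'm) pobj \<Rightarrow> bool" where
  "pers_obj C L P \<longleftrightarrow> (\<forall>p. fst P p \<in> cObj C) \<and>
     (\<forall>p. snd P p \<in> (if p \<in> L then hom C (fst P p) (fst P (p - 1))
                               else hom C (fst P (p - 1)) (fst P p)))"

definition tempered :: "('o, 'm, 'k) lcat \<Rightarrow> ('o, 'm) pobj \<Rightarrow> bool" where
  "tempered C P \<longleftrightarrow> finite {p. \<not> is_iso C (snd P p)}"

definition pers_mor :: "('o, 'm, 'k) lcat \<Rightarrow> int set \<Rightarrow> ('o, 'm) pobj \<Rightarrow> ('o, 'm) pobj \<Rightarrow> (int \<Rightarrow> 'm) \<Rightarrow> bool" where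
  "pers_mor C L P Q f \<longleftrightarrow> (\<forall>p. f p \<in> hom C (fst P p) (fst Q p)) \<and>
     (\<forall>p. if p \<in> L then cComp C (f (p - 1)) (snd P p) = cComp C (snd Q p) (f p)
          else cComp C (f p) (snd P p) = cComp C (snd Q p) (f (p - 1)))"

definition tempered_pers_cat :: "('o, 'm, 'k) lcat \<Rightarrow> int set \<Rightarrow> (('o, 'm) pobj, ('o, 'm) pmor, 'k) lcat" where
  "tempered_pers_cat C L =
    \<lparr> cObj = {P. pers_obj C L P \<and> tempered C P},
      cMor = {(P, Q, f). pers_obj C L P \<and> tempered C P \<and> pers_obj C L Q \<and> tempered C Q \<and>
                          pers_mor C L P Q f},
      cDom = (\<lambda>m. fst m),
      cCod = (\<lambda>m. fst (snd m)),
      cComp = (\<lambda>(Q', R, g) (P, Q, f). (P, R, \<lambda>p. cComp C (g p) (f p))),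
      cId = (\<lambda>P. (P, P, \<lambda>p. cId C (fst P p))),
      cAdd = (\<lambda>(P, Q, f) (P', Q', g). (P, Q, \<lambda>p. cAdd C (f p) (g p))),
      cZero = (\<lambda>P Q. (P, Q, \<lambda>p. cZero C (fst P p) (fst Q p))),
      cSmul = (\<lambda>a (P, Q, f). (P, Q, \<lambda>p. cSmul C a (f p))) \<rparr>"

definition nbiprod :: "('o, 'm, 'k) lcat \<Rightarrow> (nat \<Rightarrow> 'o) \<Rightarrow> nat \<Rightarrow> 'o \<Rightarrow> (nat \<Rightarrow> 'm) \<Rightarrow> (nat \<Rightarrow> 'm) \<Rightarrow> bool" where
  "nbiprod D A n X \<iota> \<pi> \<longleftrightarrow> X \<in> cObj D \<and>
     (\<forall>k<n. A k \<in> cObj D \<and> \<iota> k \<in> hom D (A k) X \<and> \<pi> k \<in> hom D X (A k)) \<and>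
     (\<forall>j<n. \<forall>k<n. cComp D (\<pi> j) (\<iota> k) = (if j = k then cId D (A k) else cZero D (A k) (A j))) \<and>
     foldr (\<lambda>k acc. cAdd D (cComp D (\<iota> k) (\<pi> k)) acc) [0..<n] (cZero D X X) = cId D X"

definition indecomposable :: "('o, 'm, 'k) lcat \<Rightarrow> 'o \<Rightarrow> bool" where
  "indecomposable D X \<longleftrightarrow> X \<in> cObj D \<and> \<not> is_zero_obj D X \<and>
     \<not> (\<exists>A B i1 i2 p1 p2. \<not> is_zero_obj D A \<and> \<not> is_zero_obj D B \<and> biprod D A B X i1 i2 p1 p2)"

definition end_unit :: "('o, 'm, 'k) lcat \<Rightarrow> 'o \<Rightarrow> 'm \<Rightarrow> bool" where
  "end_unit D X f \<longleftrightarrow> (\<exists>g\<in>hom D X X. cComp D g f = cId D X \<and> cComp D f g = cId D X)"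

text \<open>The endomorphism ring (hom D X X, cAdd, cComp, cZero, cId) is local; 1 - f is
  cAdd (cId X) (cSmul (-1) f).\<close>
definition local_end :: "('o, 'm, 'k::ring_1) lcat \<Rightarrow> 'o \<Rightarrow> bool" where
  "local_end D X \<longleftrightarrow> cId D X \<noteq> cZero D X X \<and>
     (\<forall>f\<in>hom D X X. \<not> end_unit D X f \<longrightarrow>
        end_unit D X (cAdd D (cId D X) (cSmul D (-1) f)))"

definition krull_schmidt :: "('o, 'm, 'k::ring_1) lcat \<Rightarrow> bool" where
  "krull_schmidt D \<longleftrightarrow>
     (\<forall>X\<in>cObj D. \<exists>n A \<iota> \<pi>. (\<forall>k<n. indecomposable D (A k)) \<and> nbiprod D A n X \<iota> \<pi>) \<and>
     (\<forall>X. indecomposable D X \<longrightarrow> local_end D X)"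

end

theory Submission
  imports Defs Complex_Main "HOL-Library.Function_Algebras" "HOL-Computational_Algebra.Computational_Algebra"
begin

lemma fun_dep:
  fixes w :: "nat \<Rightarrow> nat \<Rightarrow> 'k::field"
  assumes sup: "\<And>i j. i < n \<Longrightarrow> j \<ge> d \<Longrightarrow> w i j = 0" and nd: "n > d"
  shows "\<exists>c. (\<exists>i<n. c i \<noteq> 0) \<and> (\<forall>j. (\<Sum>i<n. c i * w i j) = 0)"
proof -
  define sc :: "'k \<Rightarrow> (nat \<Rightarrow> 'k) \<Rightarrow> (nat \<Rightarrow> 'k)" where "sc = (\<lambda>c f x. c * f x)"
  interpret V: vector_space sc
    by unfold_locales (auto simp: sc_def fun_eq_iff algebra_simps)
  have sumap: "\<And>(g :: _ \<Rightarrow> nat \<Rightarrow> 'k) A j. (sum g A) j = (\<Sum>a\<in>A. g a j)"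
  proof -
    fix g :: "_ \<Rightarrow> nat \<Rightarrow> 'k" and A j
    show "(sum g A) j = (\<Sum>a\<in>A. g a j)"
      by (induction A rule: infinite_finite_induct) auto
  qed
  show ?thesis
  proof (cases "inj_on w {..<n}")
    case False
    then obtain i k where ik: "i < n" "k < n" "i \<noteq> k" "w i = w k"
      unfolding inj_on_def by auto
    define c where "c = (\<lambda>x. if x = i then (1::'k) else if x = k then -1 else 0)"
    have "\<forall>j. (\<Sum>x<n. c x * w x j) = 0"
    proof
      fix j
      have "(\<Sum>x<n. c x * w x j) = (\<Sum>x\<in>{i,k}. c x * w x j)"
        by (rule sum.mono_neutral_right) (use ik in \<open>auto simp: c_def\<close>)
      also have "\<dots> = 0" using ik by (simp add: c_def)
      finally show "(\<Sum>x<n. c x * w x j) = 0" .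
    qed
    moreover have "c i \<noteq> 0" by (simp add: c_def)
    ultimately show ?thesis using ik by blast
  next
    case True
    define \<delta> :: "nat \<Rightarrow> nat \<Rightarrow> 'k" where "\<delta> = (\<lambda>j x. if x = j then 1 else 0)"
    define T where "T = \<delta> ` {..<d}"
    have finT: "finite T" "card T \<le> d" unfolding T_def
      using card_image_le[of "{..<d}" \<delta>] by auto
    have inspan: "w i \<in> V.span T" if "i < n" for i
    proof -
      have "w i = (\<Sum>j<d. sc (w i j) (\<delta> j))"
      proof
        fix x
        show "w i x = (\<Sum>j<d. sc (w i j) (\<delta> j)) x"
        proof (cases "x < d")
          case True
          have "(\<Sum>j<d. sc (w i j) (\<delta> j)) x = (\<Sum>j<d. w i j * \<delta> j x)"
            by (simp add: sumap sc_def)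
          also have "\<dots> = (\<Sum>j\<in>{x}. w i j * \<delta> j x)"
            by (rule sum.mono_neutral_right) (use True in \<open>auto simp: \<delta>_def\<close>)
          finally show ?thesis by (simp add: \<delta>_def)
        next
          case False
          then show ?thesis using sup[OF that, of x] by (auto simp: sumap sc_def \<delta>_def)
        qed
      qed
      also have "\<dots> \<in> V.span T"
        by (intro V.span_sum V.span_scale V.span_base) (auto simp: T_def)
      finally show ?thesis .
    qed
    define S where "S = w ` {..<n}"
    have cardS: "card S = n" unfolding S_def using True card_image by fastforce
    have "\<not> V.independent S"
    proof
      assume "V.independent S"
      from V.independent_span_bound[OF finT(1) this] inspan
      have "card S \<le> card T" unfolding S_def by auto
      with cardS finT nd show False by simp
    qed
    then obtain U u where U: "finite U" "U \<subseteq> S" "(\<Sum>v\<in>U. sc (u v) v) = 0" "\<exists>v\<in>U. u v \<noteq> 0"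
      unfolding V.dependent_explicit by blast
    define c where "c = (\<lambda>i. if w i \<in> U then u (w i) else 0)"
    have "(\<Sum>i<n. sc (c i) (w i)) = (\<Sum>v\<in>S. sc (if v \<in> U then u v else 0) v)"
      unfolding S_def c_def by (subst sum.reindex[OF True]) (simp add: if_distrib)
    also have "\<dots> = (\<Sum>v\<in>U. sc (u v) v)"
      by (rule sum.mono_neutral_cong_right) (use U in \<open>auto simp: S_def sc_def\<close>)
    finally have z: "(\<Sum>i<n. sc (c i) (w i)) = 0" using U by simp
    from U obtain v where "v \<in> U" "u v \<noteq> 0" by blast
    then obtain i where "i < n" "w i = v" using U unfolding S_def by auto
    hence "c i \<noteq> 0" using \<open>v \<in> U\<close> \<open>u v \<noteq> 0\<close> by (simp add: c_def)
    moreover have "\<forall>j. (\<Sum>i<n. c i * w i j) = 0"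
      using z by (simp add: fun_eq_iff sumap sc_def)
    ultimately show ?thesis using \<open>i < n\<close> by blast
  qed
qed

definition linear_homs0 :: "('o, 'm, 'k::field) lcat \<Rightarrow> bool" where
  "linear_homs0 C \<longleftrightarrow> (\<forall>X\<in>cObj C. \<forall>Y\<in>cObj C.
     cZero C X Y \<in> hom C X Y \<and>
     (\<forall>f\<in>hom C X Y. \<forall>g\<in>hom C X Y. cAdd C f g \<in> hom C X Y) \<and>
     (\<forall>a. \<forall>f\<in>hom C X Y. cSmul C a f \<in> hom C X Y) \<and>
     (\<forall>f\<in>hom C X Y. \<forall>g\<in>hom C X Y. \<forall>h\<in>hom C X Y.
        cAdd C (cAdd C f g) h = cAdd C f (cAdd C g h)) \<and>
     (\<forall>f\<in>hom C X Y. \<forall>g\<in>hom C X Y. cAdd C f g = cAdd C g f) \<and>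
     (\<forall>f\<in>hom C X Y. cAdd C f (cZero C X Y) = f) \<and>
     (\<forall>f\<in>hom C X Y. cAdd C f (cSmul C (-1) f) = cZero C X Y) \<and>
     (\<forall>f\<in>hom C X Y. cSmul C 1 f = f) \<and>
     (\<forall>a b. \<forall>f\<in>hom C X Y. cSmul C a (cSmul C b f) = cSmul C (a * b) f) \<and>
     (\<forall>a b. \<forall>f\<in>hom C X Y. cSmul C (a + b) f = cAdd C (cSmul C a f) (cSmul C b f)) \<and>
     (\<forall>a. \<forall>f\<in>hom C X Y. \<forall>g\<in>hom C X Y.
        cSmul C a (cAdd C f g) = cAdd C (cSmul C a f) (cSmul C a g)))"

definition vs :: "('o, 'm, 'k) lcat \<Rightarrow> ('i \<Rightarrow> 'm) \<Rightarrow> 'i list \<Rightarrow> 'o \<Rightarrow> 'o \<Rightarrow> 'm" where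
  "vs D g ks X Y = foldr (\<lambda>k acc. cAdd D (g k) acc) ks (cZero D X Y)"

definition peval :: "('o, 'm, 'k::field) lcat \<Rightarrow> 'o \<Rightarrow> 'k poly \<Rightarrow> 'm \<Rightarrow> 'm" where
  "peval D X q f = fold_coeffs (\<lambda>a b. cAdd D (cSmul D a (cId D X)) (cComp D f b)) q (cZero D X X)"

definition oidem :: "('o, 'm, 'k) lcat \<Rightarrow> 'o \<Rightarrow> nat set \<Rightarrow> (nat \<Rightarrow> 'm) \<Rightarrow> bool" where
  "oidem D X K e \<longleftrightarrow> (\<forall>k\<in>K. e k \<in> hom D X X \<and> cComp D (e k) (e k) = e k \<and> e k \<noteq> cZero D X X) \<and>
     (\<forall>j\<in>K. \<forall>k\<in>K. j \<noteq> k \<longrightarrow> cComp D (e j) (e k) = cZero D X X)"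

definition idem_split :: "('o, 'm, 'k) lcat \<Rightarrow> bool" where
  "idem_split D \<longleftrightarrow> (\<forall>X\<in>cObj D. \<forall>e\<in>hom D X X. cComp D e e = e \<longrightarrow>
     (\<exists>A \<iota> \<pi>. A \<in> cObj D \<and> \<iota> \<in> hom D A X \<and> \<pi> \<in> hom D X A \<and> cComp D \<pi> \<iota> = cId D A \<and> cComp D \<iota> \<pi> = e))"

definition oidem_bounded :: "('o, 'm, 'k) lcat \<Rightarrow> bool" where
  "oidem_bounded D \<longleftrightarrow> (\<forall>X\<in>cObj D. \<exists>N. \<forall>K e. finite K \<longrightarrow> oidem D X K e \<longrightarrow> card K \<le> N)"

definition poly_annih :: "('o, 'm, 'k::field) lcat \<Rightarrow> bool" where
  "poly_annih D \<longleftrightarrow> (\<forall>X\<in>cObj D. \<forall>f\<in>hom D X X. \<exists>P. P \<noteq> 0 \<and> peval D X P f = cZero D X X)"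

locale prelin =
  fixes D :: "('o, 'm, 'k::field) lcat"
  assumes cat: "is_category D" and lin: "linear_homs0 D" and bil: "bilinear_comp D"
begin

abbreviation "Ob \<equiv> cObj D"
abbreviation "H \<equiv> hom D"
abbreviation "cmp \<equiv> cComp D"
abbreviation "ad \<equiv> cAdd D"
abbreviation "zr \<equiv> cZero D"
abbreviation "sm \<equiv> cSmul D"
abbreviation "idm \<equiv> cId D"

lemma hom_mor: "f \<in> H X Y \<Longrightarrow> f \<in> cMor D" by (simp add: hom_def)
lemma hom_dom: "f \<in> H X Y \<Longrightarrow> cDom D f = X" by (simp add: hom_def)
lemma hom_cod: "f \<in> H X Y \<Longrightarrow> cCod D f = Y" by (simp add: hom_def)
lemma hom_obs: "f \<in> H X Y \<Longrightarrow> X \<in> Ob \<and> Y \<in> Ob"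
  using cat unfolding is_category_def hom_def by auto

lemma id_hom[simp]: "X \<in> Ob \<Longrightarrow> idm X \<in> H X X"
  using cat unfolding is_category_def by auto
lemma comp_hom: "f \<in> H X Y \<Longrightarrow> g \<in> H Y Z \<Longrightarrow> cmp g f \<in> H X Z"
  using cat hom_obs[of f X Y] hom_obs[of g Y Z] unfolding is_category_def by blast
lemma assoc: "f \<in> H W X \<Longrightarrow> g \<in> H X Y \<Longrightarrow> h \<in> H Y Z \<Longrightarrow> cmp h (cmp g f) = cmp (cmp h g) f"
  using cat hom_obs[of f W X] hom_obs[of h Y Z] unfolding is_category_def by blast
lemma id_r[simp]: "f \<in> H X Y \<Longrightarrow> cmp f (idm X) = f"
  using cat hom_obs[of f X Y] unfolding is_category_def by blast
lemma id_l[simp]: "f \<in> H X Y \<Longrightarrow> cmp (idm Y) f = f"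
  using cat hom_obs[of f X Y] unfolding is_category_def by blast

lemma hom_ob1: "f \<in> H X Y \<Longrightarrow> X \<in> Ob" using hom_obs by blast
lemma hom_ob2: "f \<in> H X Y \<Longrightarrow> Y \<in> Ob" using hom_obs by blast

lemma lin_at: assumes "X \<in> Ob" "Y \<in> Ob" shows
  "zr X Y \<in> H X Y \<and>
     (\<forall>f\<in>H X Y. \<forall>g\<in>H X Y. ad f g \<in> H X Y) \<and>
     (\<forall>a. \<forall>f\<in>H X Y. sm a f \<in> H X Y) \<and>
     (\<forall>f\<in>H X Y. \<forall>g\<in>H X Y. \<forall>h\<in>H X Y. ad (ad f g) h = ad f (ad g h)) \<and>
     (\<forall>f\<in>H X Y. \<forall>g\<in>H X Y. ad f g = ad g f) \<and>
     (\<forall>f\<in>H X Y. ad f (zr X Y) = f) \<and>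
     (\<forall>f\<in>H X Y. ad f (sm (-1) f) = zr X Y) \<and>
     (\<forall>f\<in>H X Y. sm 1 f = f) \<and>
     (\<forall>a b. \<forall>f\<in>H X Y. sm a (sm b f) = sm (a * b) f) \<and>
     (\<forall>a b. \<forall>f\<in>H X Y. sm (a + b) f = ad (sm a f) (sm b f)) \<and>
     (\<forall>a. \<forall>f\<in>H X Y. \<forall>g\<in>H X Y. sm a (ad f g) = ad (sm a f) (sm a g))"
  by (rule bspec[OF bspec[OF lin[unfolded linear_homs0_def] assms(1)] assms(2)])

lemma zr_hom[simp]: "X \<in> Ob \<Longrightarrow> Y \<in> Ob \<Longrightarrow> zr X Y \<in> H X Y"
  using lin unfolding linear_homs0_def by blast
lemma add_hom: "f \<in> H X Y \<Longrightarrow> g \<in> H X Y \<Longrightarrow> ad f g \<in> H X Y"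
  by (frule hom_ob1, frule hom_ob2, drule (1) lin_at, elim conjE, blast)
lemma sm_hom: "f \<in> H X Y \<Longrightarrow> sm a f \<in> H X Y"
  by (frule hom_ob1, frule hom_ob2, drule (1) lin_at, elim conjE, blast)
lemma add_assoc: "f \<in> H X Y \<Longrightarrow> g \<in> H X Y \<Longrightarrow> h \<in> H X Y \<Longrightarrow> ad (ad f g) h = ad f (ad g h)"
  by (frule hom_ob1, frule hom_ob2, drule (1) lin_at, elim conjE, blast)
lemma add_comm: "f \<in> H X Y \<Longrightarrow> g \<in> H X Y \<Longrightarrow> ad f g = ad g f"
  by (frule hom_ob1, frule hom_ob2, drule (1) lin_at, elim conjE, blast)
lemma add_zr[simp]: "f \<in> H X Y \<Longrightarrow> ad f (zr X Y) = f"
  by (frule hom_ob1, frule hom_ob2, drule (1) lin_at, elim conjE, blast)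
lemma add_neg: "f \<in> H X Y \<Longrightarrow> ad f (sm (-1) f) = zr X Y"
  by (frule hom_ob1, frule hom_ob2, drule (1) lin_at, elim conjE, blast)
lemma sm_one[simp]: "f \<in> H X Y \<Longrightarrow> sm 1 f = f"
  by (frule hom_ob1, frule hom_ob2, drule (1) lin_at, elim conjE, blast)
lemma sm_sm: "f \<in> H X Y \<Longrightarrow> sm a (sm b f) = sm (a * b) f"
  by (frule hom_ob1, frule hom_ob2, drule (1) lin_at, elim conjE, blast)
lemma sm_addl: "f \<in> H X Y \<Longrightarrow> sm (a + b) f = ad (sm a f) (sm b f)"
  by (frule hom_ob1, frule hom_ob2, drule (1) lin_at, elim conjE, blast)
lemma sm_addr: assumes "f \<in> H X Y" "g \<in> H X Y" shows "sm a (ad f g) = ad (sm a f) (sm a g)"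
proof -
  have "X \<in> Ob" "Y \<in> Ob" using hom_ob1[OF assms(1)] hom_ob2[OF assms(1)] .
  from lin_at[OF this] have "\<forall>a. \<forall>f\<in>H X Y. \<forall>g\<in>H X Y. sm a (ad f g) = ad (sm a f) (sm a g)" by blast
  thus ?thesis using assms by blast
qed

lemma comp_addr: "f \<in> H X Y \<Longrightarrow> f' \<in> H X Y \<Longrightarrow> g \<in> H Y Z \<Longrightarrow> cmp g (ad f f') = ad (cmp g f) (cmp g f')"
  using bil hom_obs[of f X Y] hom_obs[of g Y Z] unfolding bilinear_comp_def by blast
lemma comp_addl: "f \<in> H X Y \<Longrightarrow> g \<in> H Y Z \<Longrightarrow> g' \<in> H Y Z \<Longrightarrow> cmp (ad g g') f = ad (cmp g f) (cmp g' f)"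
  using bil hom_obs[of f X Y] hom_obs[of g Y Z] unfolding bilinear_comp_def by blast
lemma comp_smr: "f \<in> H X Y \<Longrightarrow> g \<in> H Y Z \<Longrightarrow> cmp g (sm a f) = sm a (cmp g f)"
  using bil hom_obs[of f X Y] hom_obs[of g Y Z] unfolding bilinear_comp_def by blast
lemma comp_sml: "f \<in> H X Y \<Longrightarrow> g \<in> H Y Z \<Longrightarrow> cmp (sm a g) f = sm a (cmp g f)"
  using bil hom_obs[of f X Y] hom_obs[of g Y Z] unfolding bilinear_comp_def by blast

lemma zr_add[simp]: "f \<in> H X Y \<Longrightarrow> ad (zr X Y) f = f"
  using add_comm[of f X Y "zr X Y"] hom_obs[of f X Y] by simp

lemma add_cancel: assumes "a \<in> H X Y" "b \<in> H X Y" "c \<in> H X Y" "ad a b = ad a c" shows "b = c"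
proof -
  have n: "sm (-1) a \<in> H X Y" using assms sm_hom by blast
  have "b = ad (ad (sm (-1) a) a) b"
    using add_neg[OF assms(1)] add_comm[OF assms(1) n] assms by simp
  also have "\<dots> = ad (sm (-1) a) (ad a c)" using add_assoc[OF n assms(1) assms(2)] assms by simp
  also have "\<dots> = ad (ad (sm (-1) a) a) c" using add_assoc[OF n assms(1) assms(3)] by simp
  also have "\<dots> = c" using add_neg[OF assms(1)] add_comm[OF assms(1) n] assms by simp
  finally show ?thesis .
qed

lemma sm_zero[simp]: assumes "f \<in> H X Y" shows "sm 0 f = zr X Y"
proof -
  have h: "sm 0 f \<in> H X Y" using assms sm_hom by blast
  have "ad (sm 0 f) (sm 0 f) = ad (sm 0 f) (zr X Y)"
    using sm_addl[OF assms, of 0 0] h by simp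
  thus ?thesis using add_cancel[OF h h] h hom_obs[OF assms] by simp
qed

lemma sm_zr[simp]: assumes "X \<in> Ob" "Y \<in> Ob" shows "sm a (zr X Y) = zr X Y"
proof -
  have "sm a (zr X Y) = sm a (sm 0 (zr X Y))" using sm_zero[of "zr X Y" X Y] assms zr_hom by metis
  also have "\<dots> = zr X Y" using sm_sm[of "zr X Y" X Y a 0] assms by simp
  finally show ?thesis .
qed

lemma comp_zr_r[simp]: assumes "g \<in> H Y Z" "X \<in> Ob" shows "cmp g (zr X Y) = zr X Z"
proof -
  have Y: "Y \<in> Ob" "Z \<in> Ob" using hom_obs[OF assms(1)] by auto
  have "cmp g (zr X Y) = cmp g (sm 0 (zr X Y))" using Y assms by simp
  also have "\<dots> = sm 0 (cmp g (zr X Y))" using comp_smr[of "zr X Y" X Y g Z] Y assms by simp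
  also have "\<dots> = zr X Z" using comp_hom[of "zr X Y" X Y g Z] Y assms by simp
  finally show ?thesis .
qed

lemma comp_zr_l[simp]: assumes "f \<in> H X Y" "Z \<in> Ob" shows "cmp (zr Y Z) f = zr X Z"
proof -
  have Y: "X \<in> Ob" "Y \<in> Ob" using hom_obs[OF assms(1)] by auto
  have "cmp (zr Y Z) f = cmp (sm 0 (zr Y Z)) f" using Y assms by simp
  also have "\<dots> = sm 0 (cmp (zr Y Z) f)" using comp_sml[of f X Y "zr Y Z" Z] Y assms by simp
  also have "\<dots> = zr X Z" using comp_hom[of f X Y "zr Y Z" Z] Y assms by simp
  finally show ?thesis .
qed

lemma sm_eq_zr: assumes "f \<in> H X Y" "sm c f = zr X Y" "c \<noteq> 0" shows "f = zr X Y"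
proof -
  have "f = sm (inverse c * c) f" using assms by simp
  also have "\<dots> = sm (inverse c) (sm c f)" using sm_sm[OF assms(1)] by simp
  also have "\<dots> = zr X Y" using assms hom_obs[OF assms(1)] by simp
  finally show ?thesis .
qed

lemma neg_add: "f \<in> H X Y \<Longrightarrow> ad (sm (-1) f) f = zr X Y"
  using add_neg[of f X Y] add_comm[of f X Y "sm (-1) f"] sm_hom by metis

lemma diff_zero_eq: assumes "a \<in> H X Y" "b \<in> H X Y" "ad a (sm (-1) b) = zr X Y" shows "a = b"
proof -
  have nb: "sm (-1) b \<in> H X Y" using assms sm_hom by blast
  have "a = ad a (ad (sm (-1) b) b)" using neg_add[OF assms(2)] assms by simp
  also have "\<dots> = ad (ad a (sm (-1) b)) b" using add_assoc[OF assms(1) nb assms(2)] by simp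
  also have "\<dots> = b" using assms by simp
  finally show ?thesis .
qed

lemma add_eq_diff: assumes "a \<in> H X Y" "b \<in> H X Y" "c \<in> H X Y" "ad a b = c" shows "b = ad c (sm (-1) a)"
proof -
  have na: "sm (-1) a \<in> H X Y" using assms sm_hom by blast
  have "b = ad (ad (sm (-1) a) a) b" using neg_add[OF assms(1)] assms by simp
  also have "\<dots> = ad (sm (-1) a) c" using add_assoc[OF na assms(1) assms(2)] assms by simp
  finally show ?thesis using add_comm[OF na assms(3)] by simp
qed

end

context prelin
begin

lemma add_lcomm: assumes "a \<in> H X Y" "b \<in> H X Y" "c \<in> H X Y"
  shows "ad a (ad b c) = ad b (ad a c)"
proof -
  have "ad a (ad b c) = ad (ad a b) c" using add_assoc[OF assms] by simp
  also have "\<dots> = ad (ad b a) c" using add_comm[OF assms(1,2)] by simp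
  also have "\<dots> = ad b (ad a c)" using add_assoc[OF assms(2,1,3)] by simp
  finally show ?thesis .
qed

lemma add4: assumes "a \<in> H X Y" "b \<in> H X Y" "c \<in> H X Y" "d \<in> H X Y"
  shows "ad (ad a b) (ad c d) = ad (ad a c) (ad b d)"
proof -
  have "ad (ad a b) (ad c d) = ad a (ad b (ad c d))" using add_assoc[OF assms(1,2) add_hom[OF assms(3,4)]] by simp
  also have "\<dots> = ad a (ad c (ad b d))" using add_lcomm[OF assms(2,3,4)] by simp
  also have "\<dots> = ad (ad a c) (ad b d)" using add_assoc[OF assms(1,3) add_hom[OF assms(2,4)]] by simp
  finally show ?thesis .
qed

lemma vs_Nil[simp]: "vs D g [] X Y = zr X Y" by (simp add: vs_def)
lemma vs_Cons[simp]: "vs D g (k # ks) X Y = ad (g k) (vs D g ks X Y)" by (simp add: vs_def)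

lemma vs_hom: "X \<in> Ob \<Longrightarrow> Y \<in> Ob \<Longrightarrow> (\<forall>k\<in>set ks. g k \<in> H X Y) \<Longrightarrow> vs D g ks X Y \<in> H X Y"
  by (induction ks) (auto intro: add_hom)

lemma vs_cong: "(\<forall>k\<in>set ks. g k = g' k) \<Longrightarrow> vs D g ks X Y = vs D g' ks X Y"
  by (induction ks) auto

lemma vs_append: assumes "X \<in> Ob" "Y \<in> Ob" "\<forall>k\<in>set (xs @ ys). g k \<in> H X Y"
  shows "vs D g (xs @ ys) X Y = ad (vs D g xs X Y) (vs D g ys X Y)"
  using assms(3)
proof (induction xs)
  case Nil then show ?case using assms by (simp add: vs_hom)
next
  case (Cons k xs)
  have A: "vs D g xs X Y \<in> H X Y" "vs D g ys X Y \<in> H X Y" "g k \<in> H X Y"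
    using vs_hom[OF assms(1,2), of xs g] vs_hom[OF assms(1,2), of ys g] Cons.prems by auto
  show ?case using Cons add_assoc[OF A(3) A(1) A(2)] by simp
qed

lemma vs_comp_l: assumes "h \<in> H Y Z" "X \<in> Ob" "\<forall>k\<in>set ks. g k \<in> H X Y"
  shows "cmp h (vs D g ks X Y) = vs D (\<lambda>k. cmp h (g k)) ks X Z"
  using assms(3)
proof (induction ks)
  case Nil then show ?case using assms by simp
next
  case (Cons k ks)
  then show ?case using comp_addr[of "g k" X Y "vs D g ks X Y" h Z] vs_hom[of X Y ks g] assms hom_obs by auto
qed

lemma vs_comp_r: assumes "h \<in> H W X" "Y \<in> Ob" "\<forall>k\<in>set ks. g k \<in> H X Y"
  shows "cmp (vs D g ks X Y) h = vs D (\<lambda>k. cmp (g k) h) ks W Y"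
  using assms(3)
proof (induction ks)
  case Nil then show ?case using assms by simp
next
  case (Cons k ks)
  then show ?case using comp_addl[of h W X "g k" Y "vs D g ks X Y"] vs_hom[of X Y ks g] assms hom_obs by auto
qed

lemma vs_sm: assumes "X \<in> Ob" "Y \<in> Ob" "\<forall>k\<in>set ks. g k \<in> H X Y"
  shows "sm c (vs D g ks X Y) = vs D (\<lambda>k. sm c (g k)) ks X Y"
  using assms(3)
proof (induction ks)
  case Nil then show ?case using assms by simp
next
  case (Cons k ks)
  then show ?case using sm_addr[of "g k" X Y "vs D g ks X Y"] vs_hom[of X Y ks g] assms by auto
qed

lemma vs_add: assumes "X \<in> Ob" "Y \<in> Ob" "\<forall>k\<in>set ks. g k \<in> H X Y" "\<forall>k\<in>set ks. h k \<in> H X Y"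
  shows "vs D (\<lambda>k. ad (g k) (h k)) ks X Y = ad (vs D g ks X Y) (vs D h ks X Y)"
  using assms(3,4)
proof (induction ks)
  case Nil then show ?case using assms by simp
next
  case (Cons k ks)
  then show ?case using add4[of "g k" X Y "h k" "vs D g ks X Y" "vs D h ks X Y"] vs_hom[of X Y ks g]
      vs_hom[of X Y ks h] assms by auto
qed

lemma vs_zero: "X \<in> Ob \<Longrightarrow> Y \<in> Ob \<Longrightarrow> (\<forall>k\<in>set ks. g k = zr X Y) \<Longrightarrow> vs D g ks X Y = zr X Y"
  by (induction ks) auto

lemma vs_single: assumes "X \<in> Ob" "Y \<in> Ob" "distinct ks" "j \<in> set ks" "\<forall>k\<in>set ks. k \<noteq> j \<longrightarrow> g k = zr X Y"
  "g j \<in> H X Y"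
  shows "vs D g ks X Y = g j"
  using assms(3,4,5)
proof (induction ks)
  case Nil then show ?case by simp
next
  case (Cons k ks)
  show ?case
  proof (cases "k = j")
    case True
    have "\<forall>k\<in>set ks. g k = zr X Y" using Cons.prems True by auto
    then have "vs D g ks X Y = zr X Y" using vs_zero[OF assms(1,2)] by blast
    then show ?thesis using True assms by simp
  next
    case False
    then show ?thesis using Cons assms vs_hom by auto
  qed
qed

lemma vs_upd: assumes "X \<in> Ob" "Y \<in> Ob" "distinct ks" "j \<in> set ks" "\<forall>k\<in>set ks. g k \<in> H X Y" "a \<in> H X Y"
  shows "ad (vs D (g(j := a)) ks X Y) (g j) = ad (vs D g ks X Y) a"
  using assms(3,4,5)
proof (induction ks)
  case Nil then show ?case by simp
next
  case (Cons k ks)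
  show ?case
  proof (cases "k = j")
    case True
    then have e: "vs D (g(j := a)) ks X Y = vs D g ks X Y" using Cons.prems by (auto intro: vs_cong)
    have V: "vs D g ks X Y \<in> H X Y" using vs_hom Cons.prems assms by auto
    have gj: "g j \<in> H X Y" using Cons.prems True by auto
    have l: "vs D (g(j := a)) (k # ks) X Y = ad a (vs D g ks X Y)" using True e by simp
    have "ad (ad a (vs D g ks X Y)) (g j) = ad (g j) (ad a (vs D g ks X Y))"
      using add_comm[OF add_hom[OF assms(6) V] gj] .
    also have "\<dots> = ad (g j) (ad (vs D g ks X Y) a)" using add_comm[OF assms(6) V] by simp
    also have "\<dots> = ad (ad (g j) (vs D g ks X Y)) a" using add_assoc[OF gj V assms(6)] by simp
    finally show ?thesis using l True by (simp only: fun_upd_same vs_Cons)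
  next
    case False
    then have jin: "j \<in> set ks" using Cons.prems by auto
    have V': "vs D (g(j := a)) ks X Y \<in> H X Y"
      by (rule vs_hom[OF assms(1,2)]) (use Cons.prems assms(6) in auto)
    have V: "vs D g ks X Y \<in> H X Y" using vs_hom Cons.prems assms by auto
    have gk: "g k \<in> H X Y" "g j \<in> H X Y" using Cons.prems jin by auto
    have ih: "ad (vs D (g(j := a)) ks X Y) (g j) = ad (vs D g ks X Y) a"
      by (rule Cons.IH) (use Cons.prems jin in auto)
    have "ad (vs D (g(j := a)) (k # ks) X Y) (g j) = ad (g k) (ad (vs D (g(j := a)) ks X Y) (g j))"
      using False add_assoc[OF gk(1) V' gk(2)] by simp
    also have "\<dots> = ad (g k) (ad (vs D g ks X Y) a)" by (simp only: ih)
    also have "\<dots> = ad (vs D g (k # ks) X Y) a" using add_assoc[OF gk(1) V assms(6)] by simp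
    finally show ?thesis .
  qed
qed

lemma zero_obj_iff: assumes "X \<in> Ob" shows "is_zero_obj D X \<longleftrightarrow> idm X = zr X X"
proof
  assume "is_zero_obj D X"
  then have "\<exists>!f. f \<in> H X X" using assms unfolding is_zero_obj_def by blast
  then show "idm X = zr X X" using assms id_hom zr_hom by blast
next
  assume z: "idm X = zr X X"
  have a: "f = zr X Y" if "f \<in> H X Y" for f Y
  proof -
    have "f = cmp f (idm X)" using that by simp
    also have "\<dots> = zr X Y" using z that hom_obs by simp
    finally show ?thesis .
  qed
  have b: "f = zr Y X" if "f \<in> H Y X" for f Y
  proof -
    have "f = cmp (idm X) f" using that by simp
    also have "\<dots> = zr Y X" using z that hom_obs by simp
    finally show ?thesis .
  qed
  show "is_zero_obj D X" unfolding is_zero_obj_def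
  proof (intro conjI ballI)
    show "X \<in> Ob" by fact
    fix Y assume Y: "Y \<in> Ob"
    show "\<exists>!f. f \<in> H X Y" using a zr_hom[OF assms Y] by blast
    show "\<exists>!f. f \<in> H Y X" using b zr_hom[OF Y assms] by blast
  qed
qed

lemma peval_0[simp]: "peval D X 0 f = zr X X" by (simp add: peval_def)

lemma peval_pCons: assumes "X \<in> Ob" "f \<in> H X X"
  shows "peval D X (pCons a q) f = ad (sm a (idm X)) (cmp f (peval D X q f))"
proof (cases "a = 0 \<and> q = 0")
  case True
  then show ?thesis using assms by (simp add: peval_def sm_zero[OF id_hom[OF assms(1)]])
next
  case False
  then have nz: "pCons a q \<noteq> 0" by auto
  have "fold_coeffs (\<lambda>a b. ad (sm a (idm X)) (cmp f b)) (pCons a q) =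
        (\<lambda>b. ad (sm a (idm X)) (cmp f b)) \<circ> fold_coeffs (\<lambda>a b. ad (sm a (idm X)) (cmp f b)) q"
    using False by (cases "a = 0") simp_all
  then show ?thesis unfolding peval_def by simp
qed

lemma peval_hom: assumes "X \<in> Ob" "f \<in> H X X" shows "peval D X q f \<in> H X X"
proof (induction q)
  case 0 then show ?case using assms by simp
next
  case (pCons a q)
  then show ?case using assms by (simp add: peval_pCons add_hom sm_hom comp_hom)
qed

lemma peval_add: assumes "X \<in> Ob" "f \<in> H X X" shows "peval D X (p + q) f = ad (peval D X p f) (peval D X q f)"
proof (induction p q rule: poly_induct2)
  case 0 then show ?case using assms by simp
next
  case (pCons a p b q)
  have h: "sm a (idm X) \<in> H X X" "sm b (idm X) \<in> H X X" "cmp f (peval D X p f) \<in> H X X" "cmp f (peval D X q f) \<in> H X X"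
    using sm_hom[OF id_hom[OF assms(1)]] comp_hom[OF peval_hom[OF assms] assms(2)] by auto
  show ?case using pCons assms
    by (simp add: peval_pCons sm_addl[OF id_hom[OF assms(1)]] comp_addr[OF peval_hom[OF assms] peval_hom[OF assms] assms(2)] add4[OF h(1) h(2) h(3) h(4)])
qed

lemma peval_smult: assumes "X \<in> Ob" "f \<in> H X X" shows "peval D X (smult c p) f = sm c (peval D X p f)"
proof (induction p)
  case 0 then show ?case using assms by simp
next
  case (pCons a p)
  have h: "sm a (idm X) \<in> H X X" "cmp f (peval D X p f) \<in> H X X" "peval D X p f \<in> H X X"
    using sm_hom[OF id_hom[OF assms(1)]] comp_hom[OF peval_hom[OF assms] assms(2)] peval_hom[OF assms] by auto
  show ?case using pCons assms
    by (simp add: peval_pCons sm_addr[OF h(1) h(2)] sm_sm[of "idm X" X X] comp_smr[OF h(3) assms(2)])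
qed

lemma peval_pCons0: assumes "X \<in> Ob" "f \<in> H X X" shows "peval D X (pCons 0 p) f = cmp f (peval D X p f)"
  using assms comp_hom[OF peval_hom[OF assms, of p] assms(2)] by (simp add: peval_pCons sm_zero[OF id_hom[OF assms(1)]])

lemma peval_mult: assumes "X \<in> Ob" "f \<in> H X X"
  shows "peval D X (p * q) f = cmp (peval D X p f) (peval D X q f)"
proof (induction p)
  case 0 then show ?case using assms by (simp add: comp_zr_l[OF peval_hom[OF assms]])
next
  case (pCons a p)
  have Q: "peval D X q f \<in> H X X" "peval D X p f \<in> H X X" using assms peval_hom by auto
  have "peval D X (pCons a p * q) f = ad (sm a (peval D X q f)) (cmp f (cmp (peval D X p f) (peval D X q f)))"
    using pCons assms by (simp add: peval_add peval_smult peval_pCons0)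
  also have "\<dots> = cmp (peval D X (pCons a p) f) (peval D X q f)"
  proof -
    have s1: "sm a (idm X) \<in> H X X" "cmp f (peval D X p f) \<in> H X X"
      using sm_hom[OF id_hom[OF assms(1)]] comp_hom[OF peval_hom[OF assms] assms(2)] by auto
    show ?thesis using assms
      by (simp add: peval_pCons comp_addl[OF Q(1) s1] comp_sml[OF Q(1) id_hom[OF assms(1)]] id_l[OF Q(1)] assoc[OF Q(1) Q(2) assms(2)] Q)
  qed
  finally show ?case .
qed

lemma peval_1: assumes "X \<in> Ob" "f \<in> H X X" shows "peval D X 1 f = idm X"
  using assms by (simp add: one_pCons peval_pCons comp_zr_r[OF assms(2) assms(1)] sm_one[OF id_hom[OF assms(1)]])

lemma peval_x: assumes "X \<in> Ob" "f \<in> H X X" shows "peval D X [:0, 1:] f = f"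
  using assms by (simp add: peval_pCons comp_zr_r[OF assms(2) assms(1)] sm_zero[OF id_hom[OF assms(1)]] sm_one[OF id_hom[OF assms(1)]])

lemma peval_neg: assumes "X \<in> Ob" "f \<in> H X X" shows "peval D X (- p) f = sm (-1) (peval D X p f)"
  using peval_smult[OF assms, of "-1" p] by simp

lemma peval_comm: assumes "X \<in> Ob" "f \<in> H X X"
  shows "cmp (peval D X p f) (peval D X q f) = cmp (peval D X q f) (peval D X p f)"
  using peval_mult[OF assms, of p q] peval_mult[OF assms, of q p] by (simp add: mult.commute)

lemma peval_nat: assumes "X \<in> Ob" "Y \<in> Ob" "f \<in> H X X" "f' \<in> H Y Y" "g \<in> H X Y" "cmp g f = cmp f' g"
  shows "cmp g (peval D X q f) = cmp (peval D Y q f') g"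
proof (induction q)
  case 0 then show ?case using assms by simp
next
  case (pCons a q)
  have P: "peval D X q f \<in> H X X" "peval D Y q f' \<in> H Y Y" using assms peval_hom by auto
  have s1: "sm a (idm X) \<in> H X X" "cmp f (peval D X q f) \<in> H X X"
    using sm_hom[OF id_hom[OF assms(1)]] comp_hom[OF peval_hom[OF assms(1,3)] assms(3)] by auto
  have s2: "sm a (idm Y) \<in> H Y Y" "cmp f' (peval D Y q f') \<in> H Y Y"
    using sm_hom[OF id_hom[OF assms(2)]] comp_hom[OF peval_hom[OF assms(2,4)] assms(4)] by auto
  have "cmp g (peval D X (pCons a q) f) = ad (sm a g) (cmp (cmp g f) (peval D X q f))"
    using assms P by (simp add: peval_pCons comp_addr[OF s1 assms(5)] comp_smr[OF id_hom[OF assms(1)] assms(5)]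
       assoc[OF P(1) assms(3) assms(5)])
  also have "\<dots> = ad (sm a g) (cmp f' (cmp g (peval D X q f)))"
    using assms P by (simp add: assoc[OF P(1) assms(5) assms(4)])
  also have "\<dots> = cmp (peval D Y (pCons a q) f') g"
    using assms P pCons by (simp add: peval_pCons comp_addl[OF assms(5) s2] comp_sml[OF assms(5) id_hom[OF assms(2)]]
       assoc[OF assms(5) P(2) assms(4)])
  finally show ?case .
qed

end

lemma trunc_inv:
  fixes Q :: "'k::field poly" assumes c: "poly Q 0 \<noteq> 0"
  shows "\<exists>a b. a * [:0,1:] ^ n + b * Q = 1"
proof (induction n)
  case 0 show ?case by (rule exI[of _ 1], rule exI[of _ 0]) simp
next
  case (Suc n)
  then obtain a b where h1: "a * [:0,1:] ^ n + b * Q = 1" by blast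
  define k where "k = poly a 0 / poly Q 0"
  have "poly (a - [:k:] * Q) 0 = 0" using c by (simp add: k_def)
  then have "[:0,1:] dvd (a - [:k:] * Q)" using dvd_iff_poly_eq_0[of 0 "a - [:k:] * Q"] by simp
  then obtain a' where h2: "a - [:k:] * Q = [:0,1:] * a'" by (elim dvdE)
  have "a' * [:0,1:] ^ Suc n + (b + [:k:] * [:0,1:] ^ n) * Q = [:0,1:] ^ n * ([:0,1:] * a') + (b + [:k:] * [:0,1:] ^ n) * Q"
    by (simp add: algebra_simps)
  also have "\<dots> = [:0,1:] ^ n * (a - [:k:] * Q) + (b + [:k:] * [:0,1:] ^ n) * Q" by (simp only: h2)
  also have "\<dots> = a * [:0,1:] ^ n + b * Q" by (simp add: algebra_simps)
  also have "\<dots> = 1" by (rule h1)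
  finally show ?case by blast
qed

lemma poly_split:
  fixes P :: "'k::field poly" assumes "P \<noteq> 0"
  shows "\<exists>m Q a b. P = [:0,1:] ^ m * Q \<and> a * [:0,1:] ^ Suc m + b * Q = 1"
proof -
  obtain Q where Q: "P = [:- 0, 1:] ^ order 0 P * Q" "\<not> [:- 0, 1:] dvd Q"
    using order_decomp[OF assms] by blast
  have "poly Q 0 \<noteq> 0" using Q(2) dvd_iff_poly_eq_0[of 0 Q] by simp
  from trunc_inv[OF this, of "Suc (order 0 P)"] obtain a b where "a * [:0,1:] ^ Suc (order 0 P) + b * Q = 1" by blast
  then show ?thesis using Q(1) by auto
qed

lemma geo_poly: "(1 - [:0,1:]) * (\<Sum>i<m. [:0,1:] ^ i) = (1 - [:0,1::'k::field:] ^ m)"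
  by (induction m) (simp_all add: algebra_simps)

context prelin
begin

lemma compl_facts:
  assumes X: "X \<in> Ob" and e: "e \<in> H X X" and ee: "cmp e e = e"
  shows "ad (idm X) (sm (-1) e) \<in> H X X"
    "cmp e (ad (idm X) (sm (-1) e)) = zr X X"
    "cmp (ad (idm X) (sm (-1) e)) e = zr X X"
    "cmp (ad (idm X) (sm (-1) e)) (ad (idm X) (sm (-1) e)) = ad (idm X) (sm (-1) e)"
    "ad e (ad (idm X) (sm (-1) e)) = idm X"
proof -
  have I: "idm X \<in> H X X" using X by simp
  have N: "sm (-1) e \<in> H X X" using sm_hom[OF e] .
  show U: "ad (idm X) (sm (-1) e) \<in> H X X" using add_hom[OF I N] .
  show 1: "cmp e (ad (idm X) (sm (-1) e)) = zr X X"
    using comp_addr[OF I N e] comp_smr[OF e e] ee add_neg[OF e] id_r[OF e] by simp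
  show 2: "cmp (ad (idm X) (sm (-1) e)) e = zr X X"
    using comp_addl[OF e I N] comp_sml[OF e e] ee add_neg[OF e] id_l[OF e] by simp
  show "cmp (ad (idm X) (sm (-1) e)) (ad (idm X) (sm (-1) e)) = ad (idm X) (sm (-1) e)"
    using comp_addl[OF U I N] id_l[OF U] comp_sml[OF U e] 1 sm_zr[OF X X] add_zr[OF U] by simp
  show "ad e (ad (idm X) (sm (-1) e)) = idm X"
    using add_lcomm[OF e I N] add_neg[OF e] add_zr[OF I] by simp
qed

lemma split_facts:
  assumes "\<iota> \<in> H A X" "\<pi> \<in> H X A" "cmp \<pi> \<iota> = idm A" "cmp \<iota> \<pi> = e"
  shows "cmp e \<iota> = \<iota>" "cmp \<pi> e = \<pi>"
proof -
  show "cmp e \<iota> = \<iota>" using assoc[OF assms(1) assms(2) assms(1)] assms(3,4) id_r[OF assms(1)] by simp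
  show "cmp \<pi> e = \<pi>" using assoc[OF assms(2) assms(1) assms(2)] assms(3,4) id_l[OF assms(2)] by simp
qed

lemma zero_split:
  assumes "A \<in> Ob" "\<iota> \<in> H A X" "\<pi> \<in> H X A" "cmp \<iota> \<pi> = e" "is_zero_obj D A"
  shows "e = zr X X"
proof -
  have X: "X \<in> Ob" using hom_ob2[OF assms(2)] .
  have z: "idm A = zr A A" using zero_obj_iff[OF assms(1)] assms(5) by simp
  have "e = cmp (cmp \<iota> (idm A)) \<pi>" using assms(2,4) by simp
  also have "\<dots> = zr X X" using z comp_zr_r[OF assms(2) assms(1)] comp_zr_l[OF assms(3) X] by simp
  finally show ?thesis .
qed

lemma rank1_idem:
  assumes "a \<in> H Y X" "b \<in> H X Y" "cmp b a = idm Y"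
  shows "cmp (cmp a b) (cmp a b) = cmp a b"
proof -
  have "cmp (cmp a b) (cmp a b) = cmp a (cmp b (cmp a b))"
    using assoc[OF comp_hom[OF assms(2,1)] assms(2) assms(1)] by simp
  also have "\<dots> = cmp a (cmp (cmp b a) b)" using assoc[OF assms(2) assms(1) assms(2)] by simp
  finally have "cmp (cmp a b) (cmp a b) = cmp a (cmp (cmp b a) b)" .
  then show ?thesis using assms by simp
qed

lemma rank1_nz:
  assumes "a \<in> H Y X" "b \<in> H X Y" "cmp b a = idm Y" "\<not> is_zero_obj D Y"
  shows "cmp a b \<noteq> zr X X"
proof
  assume z: "cmp a b = zr X X"
  have Y: "Y \<in> Ob" "X \<in> Ob" using hom_obs[OF assms(1)] by auto
  have "idm Y = cmp (cmp b a) (cmp b a)" using assms(3) id_l[OF id_hom[OF Y(1)]] by simp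
  also have "\<dots> = cmp b (cmp a (cmp b a))"
    using assoc[OF comp_hom[OF assms(1,2)] assms(1) assms(2)] by simp
  also have "\<dots> = cmp b (cmp (cmp a b) a)" using assoc[OF assms(1) assms(2) assms(1)] by simp
  also have "\<dots> = zr Y Y" using z comp_zr_l[OF assms(1) Y(2)] comp_zr_r[OF assms(2) Y(1)] by simp
  finally show False using zero_obj_iff[OF Y(1)] assms(4) by simp
qed

lemma rank1_cross:
  assumes "a \<in> H Y X" "b \<in> H X Y" "a' \<in> H Y' X" "b' \<in> H X Y'" "cmp b a' = zr Y' Y"
  shows "cmp (cmp a b) (cmp a' b') = zr X X"
proof -
  have X: "X \<in> Ob" using hom_ob2[OF assms(1)] .
  have "cmp (cmp a b) (cmp a' b') = cmp a (cmp (cmp b a') b')"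
    using assoc[OF comp_hom[OF assms(4,3)] assms(2) assms(1)] assoc[OF assms(4) assms(3) assms(2)] by simp
  also have "\<dots> = zr X X" using assms(5) comp_zr_l[OF assms(4), of Y] comp_zr_r[OF assms(1) X] hom_obs[OF assms(1)] by simp
  finally show ?thesis .
qed

lemma rank1_piece:
  assumes "a \<in> H Y X" "b \<in> H X Y" "ek \<in> H X X" "ej \<in> H X X" "cmp ek a = a" "cmp b ek = b"
    "cmp ej ek = zr X X" "cmp ek ej = zr X X"
  shows "cmp ej (cmp a b) = zr X X" "cmp (cmp a b) ej = zr X X"
proof -
  have X: "X \<in> Ob" "Y \<in> Ob" using hom_obs[OF assms(1)] by auto
  have "cmp ej (cmp a b) = cmp (cmp (cmp ej ek) a) b"
    using assoc[OF assms(2) assms(1) assms(4)] assoc[OF assms(1) assms(3) assms(4)] assms(5) by simp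
  also have "\<dots> = zr X X" using assms(7) comp_zr_l[OF assms(1) X(1)] comp_zr_l[OF assms(2) X(1)] by simp
  finally show "cmp ej (cmp a b) = zr X X" .
  have "cmp (cmp a b) ej = cmp a (cmp b (cmp ek ej))"
    using assoc[OF assms(4) assms(2) assms(1)] assoc[OF assms(4) assms(3) assms(2)] assms(6) by simp
  also have "\<dots> = zr X X" using assms(8) comp_zr_r[OF assms(2) X(1)] comp_zr_r[OF assms(1) X(1)] by simp
  finally show "cmp (cmp a b) ej = zr X X" .
qed

lemma idem_trivial:
  assumes sp: "idem_split D" and ind: "indecomposable D X" and e: "e \<in> H X X" and ee: "cmp e e = e"
  shows "e = zr X X \<or> e = idm X"
proof (rule ccontr)
  assume ne: "\<not> (e = zr X X \<or> e = idm X)"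
  have X: "X \<in> Ob" using ind unfolding indecomposable_def by blast
  define u where "u = ad (idm X) (sm (-1) e)"
  note cf = compl_facts[OF X e ee, folded u_def]
  obtain A \<iota> \<pi> where A: "A \<in> Ob" "\<iota> \<in> H A X" "\<pi> \<in> H X A" "cmp \<pi> \<iota> = idm A" "cmp \<iota> \<pi> = e"
    using sp X e ee unfolding idem_split_def by blast
  obtain B \<iota>' \<pi>' where B: "B \<in> Ob" "\<iota>' \<in> H B X" "\<pi>' \<in> H X B" "cmp \<pi>' \<iota>' = idm B" "cmp \<iota>' \<pi>' = u"
    using sp X cf(1) cf(4) unfolding idem_split_def by blast
  note sA = split_facts[OF A(2-5)] and sB = split_facts[OF B(2-5)]
  have c1: "cmp \<pi>' \<iota> = zr A B"
  proof -
    have "cmp \<pi>' \<iota> = cmp (cmp \<pi>' u) (cmp e \<iota>)" using sA(1) sB(2) by simp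
    also have "\<dots> = cmp \<pi>' (cmp u (cmp e \<iota>))" using assoc[OF comp_hom[OF A(2) e] cf(1) B(3)] by simp
    also have "\<dots> = cmp \<pi>' (cmp (cmp u e) \<iota>)" using assoc[OF A(2) e cf(1)] by simp
    also have "\<dots> = zr A B" using cf(3) comp_zr_l[OF A(2) X] comp_zr_r[OF B(3) A(1)] by simp
    finally show ?thesis .
  qed
  have c2: "cmp \<pi> \<iota>' = zr B A"
  proof -
    have "cmp \<pi> \<iota>' = cmp (cmp \<pi> e) (cmp u \<iota>')" using sA(2) sB(1) by simp
    also have "\<dots> = cmp \<pi> (cmp e (cmp u \<iota>'))" using assoc[OF comp_hom[OF B(2) cf(1)] e A(3)] by simp
    also have "\<dots> = cmp \<pi> (cmp (cmp e u) \<iota>')" using assoc[OF B(2) cf(1) e] by simp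
    also have "\<dots> = zr B A" using cf(2) comp_zr_l[OF B(2) X] comp_zr_r[OF A(3) B(1)] by simp
    finally show ?thesis .
  qed
  have bp: "biprod D A B X \<iota> \<iota>' \<pi> \<pi>'"
    unfolding biprod_def using A B X c1 c2 cf(5) by simp
  have nA: "\<not> is_zero_obj D A" using zero_split[OF A(1-3) A(5)] ne by blast
  have nB: "\<not> is_zero_obj D B"
  proof
    assume "is_zero_obj D B"
    then have "u = zr X X" using zero_split[OF B(1-3) B(5)] by blast
    then have "e = idm X" using cf(5) add_zr[OF e] by simp
    with ne show False by simp
  qed
  show False using ind bp nA nB unfolding indecomposable_def by blast
qed

lemma local_end_ind:
  assumes sp: "idem_split D" and pa: "poly_annih D" and ind: "indecomposable D X"
  shows "local_end D X"
proof -
  have X: "X \<in> Ob" and nz: "\<not> is_zero_obj D X" using ind unfolding indecomposable_def by auto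
  have idnz: "idm X \<noteq> zr X X" using zero_obj_iff[OF X] nz by simp
  have "end_unit D X (ad (idm X) (sm (-1) f))" if f: "f \<in> H X X" and nu: "\<not> end_unit D X f" for f
  proof -
    obtain P where P: "P \<noteq> 0" "peval D X P f = zr X X" using pa X f unfolding poly_annih_def by blast
    define x :: "'k poly" where "x = [:0,1:]"
    obtain m Q a b where mq: "P = x ^ m * Q" and ab: "a * x ^ Suc m + b * Q = 1"
      using poly_split[OF P(1)] unfolding x_def by blast
    have pH: "\<And>q. peval D X q f \<in> H X X" using peval_hom[OF X f] .
    define e where "e = peval D X (b * Q) f"
    have eH: "e \<in> H X X" unfolding e_def by (rule pH)
    have bq: "b * Q = 1 - a * x ^ Suc m" using ab by (simp add: algebra_simps)
    have pid: "b * Q * (b * Q) = b * Q + - ((a * b * x) * P)"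
    proof -
      have "b * Q * (b * Q) = b * Q * (1 - a * x ^ Suc m)" by (simp only: bq[symmetric])
      also have "\<dots> = b * Q + - ((a * b * x) * P)" unfolding mq by (simp add: algebra_simps)
      finally show ?thesis .
    qed
    have ee: "cmp e e = e"
    proof -
      have "cmp e e = peval D X (b * Q * (b * Q)) f" unfolding e_def by (simp only: peval_mult[OF X f, of "b * Q" "b * Q"])
      also have "\<dots> = peval D X (b * Q + - ((a * b * x) * P)) f" by (simp only: pid)
      also have "\<dots> = ad e (sm (-1) (cmp (peval D X (a * b * x) f) (zr X X)))"
        by (simp only: peval_add[OF X f, of "b * Q" "- ((a * b * x) * P)"] peval_neg[OF X f, of "(a * b * x) * P"]
           peval_mult[OF X f, of "a * b * x" P] P(2) e_def)
      also have "\<dots> = e" using comp_zr_r[OF pH X] sm_zr[OF X X] add_zr[OF eH] by simp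
      finally show ?thesis .
    qed
    consider "e = zr X X" | "e = idm X" using idem_trivial[OF sp ind eH ee] by blast
    then show ?thesis
    proof cases
      case 1
      have ax: "a * x ^ Suc m = 1 + - (b * Q)" using ab by (simp add: algebra_simps)
      have pa1: "peval D X (a * x ^ Suc m) f = idm X"
        unfolding ax using 1 sm_zr[OF X X] add_zr[OF id_hom[OF X]]
        by (simp only: peval_add[OF X f, of 1 "- (b * Q)"] peval_neg[OF X f, of "b * Q"] peval_1[OF X f] e_def[symmetric])
      define g where "g = peval D X (a * x ^ m) f"
      have "x * (a * x ^ m) = a * x ^ Suc m" by (simp add: algebra_simps)
      then have fg: "cmp f g = idm X" using pa1
        unfolding g_def by (metis peval_mult[OF X f] peval_x[OF X f] x_def)
      have gf: "cmp g f = idm X"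
        using fg peval_comm[OF X f, of "a * x ^ m" x] unfolding g_def x_def by (simp add: peval_x[OF X f])
      have "end_unit D X f" unfolding end_unit_def using fg gf pH g_def by blast
      with nu show ?thesis by simp
    next
      case 2
      define Fm where "Fm = peval D X (x ^ m) f"
      have xb: "x ^ m * (b * Q) = b * P" unfolding mq by (simp add: algebra_simps)
      have "cmp Fm e = peval D X (x ^ m * (b * Q)) f"
        unfolding Fm_def e_def by (simp only: peval_mult[OF X f, of "x ^ m" "b * Q"])
      also have "\<dots> = cmp (peval D X b f) (zr X X)" by (simp only: xb peval_mult[OF X f, of b P] P(2))
      also have "\<dots> = zr X X" using comp_zr_r[OF pH X] by simp
      finally have Fz: "Fm = zr X X" using 2 id_r[OF pH[of "x ^ m"]] unfolding Fm_def by simp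
      define S where "S = (\<Sum>i<m. x ^ i)"
      define g where "g = peval D X S f"
      have u: "peval D X (1 - x) f = ad (idm X) (sm (-1) f)"
        unfolding x_def by (simp only: diff_conv_add_uminus peval_add[OF X f] peval_neg[OF X f] peval_1[OF X f] peval_x[OF X f])
      have "cmp (peval D X (1 - x) f) g = peval D X (1 - x ^ m) f"
        unfolding g_def S_def x_def by (simp only: peval_mult[OF X f, symmetric] geo_poly)
      also have "\<dots> = idm X" using Fz sm_zr[OF X X] add_zr[OF id_hom[OF X]]
        by (simp only: diff_conv_add_uminus peval_add[OF X f] peval_neg[OF X f] peval_1[OF X f] Fm_def[symmetric])
      finally have ug: "cmp (ad (idm X) (sm (-1) f)) g = idm X" using u by simp
      have gu: "cmp g (ad (idm X) (sm (-1) f)) = idm X"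
        using ug peval_comm[OF X f, of "1 - x" S] u unfolding g_def by simp
      show ?thesis unfolding end_unit_def using ug gu pH g_def by blast
    qed
  qed
  then show ?thesis unfolding local_end_def using idnz by blast
qed

end

context prelin
begin

lemma refine:
  assumes X: "X \<in> Ob" and oe: "oidem D X {..<n} e" and se: "vs D e [0..<n] X X = idm X"
    and k: "k < n" and spl: "\<iota> \<in> H Ak X" "\<pi> \<in> H X Ak" "cmp \<pi> \<iota> = idm Ak" "cmp \<iota> \<pi> = e k"
    and bp: "biprod D A1 A2 Ak i1 i2 p1 p2" and nz: "\<not> is_zero_obj D A1" "\<not> is_zero_obj D A2"
  shows "\<exists>e'. oidem D X {..<Suc n} e' \<and> vs D e' [0..<Suc n] X X = idm X"
proof -
  have Ak: "Ak \<in> Ob" using hom_ob1[OF spl(1)] .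
  have B: "A1 \<in> Ob" "A2 \<in> Ob" "i1 \<in> H A1 Ak" "i2 \<in> H A2 Ak" "p1 \<in> H Ak A1" "p2 \<in> H Ak A2"
    "cmp p1 i1 = idm A1" "cmp p2 i2 = idm A2" "cmp p2 i1 = zr A1 A2" "cmp p1 i2 = zr A2 A1"
    "ad (cmp i1 p1) (cmp i2 p2) = idm Ak"
    using bp unfolding biprod_def by auto
  have eH: "\<And>j. j < n \<Longrightarrow> e j \<in> H X X" and eI: "\<And>j. j < n \<Longrightarrow> cmp (e j) (e j) = e j"
    and eN: "\<And>j. j < n \<Longrightarrow> e j \<noteq> zr X X"
    and eO: "\<And>i j. i < n \<Longrightarrow> j < n \<Longrightarrow> i \<noteq> j \<Longrightarrow> cmp (e i) (e j) = zr X X"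
    using oe unfolding oidem_def by auto
  note sf = split_facts[OF spl]
  define a1 where "a1 = cmp \<iota> i1"
  define b1 where "b1 = cmp p1 \<pi>"
  define a2 where "a2 = cmp \<iota> i2"
  define b2 where "b2 = cmp p2 \<pi>"
  have H: "a1 \<in> H A1 X" "b1 \<in> H X A1" "a2 \<in> H A2 X" "b2 \<in> H X A2"
    unfolding a1_def b1_def a2_def b2_def using comp_hom B spl by blast+
  have bafact: "cmp (cmp p \<pi>) (cmp \<iota> i) = cmp p i" if "p \<in> H Ak Y" "i \<in> H Z Ak" for p i Y Z
  proof -
    have "cmp (cmp p \<pi>) (cmp \<iota> i) = cmp p (cmp \<pi> (cmp \<iota> i))"
      using assoc[OF comp_hom[OF that(2) spl(1)] spl(2) that(1)] by simp
    also have "\<dots> = cmp p (cmp (cmp \<pi> \<iota>) i)" using assoc[OF that(2) spl(1) spl(2)] by simp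
    also have "\<dots> = cmp p i" using spl(3) id_l[OF that(2)] by simp
    finally show ?thesis .
  qed
  have b1a1: "cmp b1 a1 = idm A1" and b2a2: "cmp b2 a2 = idm A2"
    and b2a1: "cmp b2 a1 = zr A1 A2" and b1a2: "cmp b1 a2 = zr A2 A1"
    unfolding a1_def b1_def a2_def b2_def using bafact B by auto
  define f1 where "f1 = cmp a1 b1"
  define f2 where "f2 = cmp a2 b2"
  have fH: "f1 \<in> H X X" "f2 \<in> H X X" unfolding f1_def f2_def using comp_hom H by blast+
  have fI: "cmp f1 f1 = f1" "cmp f2 f2 = f2" unfolding f1_def f2_def using rank1_idem H b1a1 b2a2 by auto
  have fN: "f1 \<noteq> zr X X" "f2 \<noteq> zr X X" unfolding f1_def f2_def using rank1_nz H b1a1 b2a2 nz by auto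
  have f12: "cmp f1 f2 = zr X X" "cmp f2 f1 = zr X X"
    unfolding f1_def f2_def using rank1_cross[OF H(1,2,3,4) b1a2] rank1_cross[OF H(3,4,1,2) b2a1] by auto
  have ea: "cmp (e k) a1 = a1" "cmp (e k) a2 = a2"
    unfolding a1_def a2_def using assoc[OF B(3) spl(1) eH[OF k]] assoc[OF B(4) spl(1) eH[OF k]] sf(1) by auto
  have be: "cmp b1 (e k) = b1" "cmp b2 (e k) = b2"
    unfolding b1_def b2_def using assoc[OF eH[OF k] spl(2) B(5)] assoc[OF eH[OF k] spl(2) B(6)] sf(2) by auto
  have pc: "cmp (e j) f1 = zr X X \<and> cmp f1 (e j) = zr X X \<and> cmp (e j) f2 = zr X X \<and> cmp f2 (e j) = zr X X"
    if "j < n" "j \<noteq> k" for j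
    unfolding f1_def f2_def
    using rank1_piece[OF H(1,2) eH[OF k] eH[OF that(1)] ea(1) be(1) eO[OF that(1) k that(2)] eO[OF k that(1)]]
      rank1_piece[OF H(3,4) eH[OF k] eH[OF that(1)] ea(2) be(2) eO[OF that(1) k that(2)] eO[OF k that(1)]] that
    by auto
  have fsum: "ad f1 f2 = e k"
  proof -
    have r: "cmp (cmp \<iota> i) (cmp p \<pi>) = cmp \<iota> (cmp (cmp i p) \<pi>)" if "p \<in> H Ak Y" "i \<in> H Y Ak" for p i Y
    proof -
      have "cmp (cmp \<iota> i) (cmp p \<pi>) = cmp \<iota> (cmp i (cmp p \<pi>))"
        using assoc[OF comp_hom[OF spl(2) that(1)] that(2) spl(1)] by simp
      also have "\<dots> = cmp \<iota> (cmp (cmp i p) \<pi>)" using assoc[OF spl(2) that(1) that(2)] by simp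
      finally show ?thesis .
    qed
    have "ad f1 f2 = ad (cmp \<iota> (cmp (cmp i1 p1) \<pi>)) (cmp \<iota> (cmp (cmp i2 p2) \<pi>))"
      unfolding f1_def f2_def a1_def b1_def a2_def b2_def using r B by simp
    also have "\<dots> = cmp \<iota> (cmp (ad (cmp i1 p1) (cmp i2 p2)) \<pi>)"
      using comp_addl[OF spl(2) comp_hom[OF B(5) B(3)] comp_hom[OF B(6) B(4)]]
        comp_addr[OF comp_hom[OF spl(2) comp_hom[OF B(5) B(3)]] comp_hom[OF spl(2) comp_hom[OF B(6) B(4)]] spl(1)]
      by simp
    also have "\<dots> = e k" using B(11) id_l[OF spl(2)] spl(4) by simp
    finally show ?thesis .
  qed
  define e' where "e' = (\<lambda>j. if j = n then f2 else if j = k then f1 else e j)"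
  have kn: "k \<noteq> n" using k by simp
  have e'H: "\<And>j. j < Suc n \<Longrightarrow> e' j \<in> H X X" unfolding e'_def using eH fH by auto
  have oe': "oidem D X {..<Suc n} e'"
    unfolding oidem_def
  proof (intro conjI ballI impI)
    fix j assume j: "j \<in> {..<Suc n}"
    show "e' j \<in> H X X" using j e'H by auto
    show "cmp (e' j) (e' j) = e' j" using j eI fI unfolding e'_def by auto
    show "e' j \<noteq> zr X X" using j eN fN unfolding e'_def by auto
  next
    fix i j assume ij: "i \<in> {..<Suc n}" "j \<in> {..<Suc n}" "i \<noteq> j"
    show "cmp (e' i) (e' j) = zr X X"
    proof (cases "i = n")
      case True
      then show ?thesis using ij f12 pc[of j] kn unfolding e'_def by auto
    next
      case nin: False
      show ?thesis
      proof (cases "i = k")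
        case True
        then show ?thesis using ij f12 pc[of j] nin kn unfolding e'_def by auto
      next
        case False
        then show ?thesis using ij pc[of i] nin eO[of i j] unfolding e'_def by auto
      qed
    qed
  qed
  have se': "vs D e' [0..<Suc n] X X = idm X"
  proof -
    have l1: "vs D e' [0..<Suc n] X X = ad (vs D e' [0..<n] X X) (vs D e' [n] X X)"
      using vs_append[OF X X, where g=e' and xs="[0..<n]" and ys="[n]"] e'H by auto
    have l2: "vs D e' [0..<n] X X = vs D (e(k := f1)) [0..<n] X X"
      by (rule vs_cong) (auto simp: e'_def)
    have l3: "vs D e' [n] X X = f2" using fH unfolding e'_def by simp
    define V where "V = vs D (e(k := f1)) [0..<n] X X"
    have VH: "V \<in> H X X" unfolding V_def by (rule vs_hom[OF X X]) (use eH fH in auto)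
    have u: "ad V (e k) = ad (idm X) f1"
      unfolding V_def using vs_upd[OF X X, of "[0..<n]" k e f1] eH fH k se by auto
    have "ad f1 (ad V f2) = ad V (ad f1 f2)" using add_lcomm[OF fH(1) VH fH(2)] .
    also have "\<dots> = ad f1 (idm X)" using u fsum add_comm[OF id_hom[OF X] fH(1)] by simp
    finally have "ad V f2 = idm X" using add_cancel[OF fH(1) add_hom[OF VH fH(2)] id_hom[OF X]] by blast
    then show ?thesis using l1 l2 l3 V_def by simp
  qed
  show ?thesis using oe' se' by blast
qed

lemma decomp_exists:
  assumes sp: "idem_split D" and bd: "oidem_bounded D" and X: "X \<in> Ob"
  shows "\<exists>n A \<iota> \<pi>. (\<forall>k<n. indecomposable D (A k)) \<and> nbiprod D A n X \<iota> \<pi>"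
proof -
  obtain N where N: "\<And>K e. finite K \<Longrightarrow> oidem D X K e \<Longrightarrow> card K \<le> N"
    using bd X unfolding oidem_bounded_def by blast
  define fam where "fam n = (\<exists>e. oidem D X {..<n} e \<and> vs D e [0..<n] X X = idm X)" for n
  have bound: "fam n \<Longrightarrow> n \<le> N" for n using N[of "{..<n}"] unfolding fam_def by auto
  have ex: "\<exists>n. fam n"
  proof (cases "idm X = zr X X")
    case True
    then have "fam 0" unfolding fam_def oidem_def by simp
    then show ?thesis by blast
  next
    case False
    then have "fam 1" unfolding fam_def oidem_def using X id_l[OF id_hom[OF X]] by (intro exI[of _ "\<lambda>_. idm X"]) simp
    then show ?thesis by blast
  qed
  then obtain n1 where n1: "fam n1" by blast
  define n0 where "n0 = (GREATEST n. fam n)"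
  have fn0: "fam n0" unfolding n0_def using GreatestI_nat[of fam n1 N] n1 bound by blast
  have maxn: "fam n \<Longrightarrow> n \<le> n0" for n unfolding n0_def using Greatest_le_nat[of fam n N] bound by blast
  obtain e where oe: "oidem D X {..<n0} e" and se: "vs D e [0..<n0] X X = idm X" using fn0 unfolding fam_def by blast
  have eH: "\<And>j. j < n0 \<Longrightarrow> e j \<in> H X X" and eI: "\<And>j. j < n0 \<Longrightarrow> cmp (e j) (e j) = e j"
    and eN: "\<And>j. j < n0 \<Longrightarrow> e j \<noteq> zr X X"
    and eO: "\<And>i j. i < n0 \<Longrightarrow> j < n0 \<Longrightarrow> i \<noteq> j \<Longrightarrow> cmp (e i) (e j) = zr X X"
    using oe unfolding oidem_def by auto
  have "\<forall>k. \<exists>t. k < n0 \<longrightarrow> (fst t \<in> Ob \<and> fst (snd t) \<in> H (fst t) X \<and> snd (snd t) \<in> H X (fst t) \<and>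
        cmp (snd (snd t)) (fst (snd t)) = idm (fst t) \<and> cmp (fst (snd t)) (snd (snd t)) = e k)"
  proof
    fix k
    show "\<exists>t. k < n0 \<longrightarrow> (fst t \<in> Ob \<and> fst (snd t) \<in> H (fst t) X \<and> snd (snd t) \<in> H X (fst t) \<and>
        cmp (snd (snd t)) (fst (snd t)) = idm (fst t) \<and> cmp (fst (snd t)) (snd (snd t)) = e k)"
    proof (cases "k < n0")
      case True
      then obtain A \<iota> \<pi> where "A \<in> Ob" "\<iota> \<in> H A X" "\<pi> \<in> H X A" "cmp \<pi> \<iota> = idm A" "cmp \<iota> \<pi> = e k"
        using sp X eH eI unfolding idem_split_def by blast
      then show ?thesis by (intro exI[of _ "(A, \<iota>, \<pi>)"]) simp
    qed simp
  qed
  then obtain t where t: "\<And>k. k < n0 \<Longrightarrow> (fst (t k) \<in> Ob \<and> fst (snd (t k)) \<in> H (fst (t k)) X \<and> snd (snd (t k)) \<in> H X (fst (t k)) \<and>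
        cmp (snd (snd (t k))) (fst (snd (t k))) = idm (fst (t k)) \<and> cmp (fst (snd (t k))) (snd (snd (t k))) = e k)"
    by (metis choice)
  define A where "A k = fst (t k)" for k
  define \<iota> where "\<iota> k = fst (snd (t k))" for k
  define \<pi> where "\<pi> k = snd (snd (t k))" for k
  have S: "A k \<in> Ob" "\<iota> k \<in> H (A k) X" "\<pi> k \<in> H X (A k)" "cmp (\<pi> k) (\<iota> k) = idm (A k)" "cmp (\<iota> k) (\<pi> k) = e k"
    if "k < n0" for k using t[OF that] unfolding A_def \<iota>_def \<pi>_def by auto
  have orth: "cmp (\<pi> j) (\<iota> k) = zr (A k) (A j)" if "j < n0" "k < n0" "j \<noteq> k" for j k
  proof -
    note sj = split_facts[OF S(2-5)[OF that(1)]] and sk = split_facts[OF S(2-5)[OF that(2)]]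
    have "cmp (\<pi> j) (\<iota> k) = cmp (cmp (\<pi> j) (e j)) (cmp (e k) (\<iota> k))" using sj sk by simp
    also have "\<dots> = cmp (\<pi> j) (cmp (e j) (cmp (e k) (\<iota> k)))"
      using assoc[OF comp_hom[OF S(2)[OF that(2)] eH[OF that(2)]] eH[OF that(1)] S(3)[OF that(1)]] by simp
    also have "\<dots> = cmp (\<pi> j) (cmp (cmp (e j) (e k)) (\<iota> k))"
      using assoc[OF S(2)[OF that(2)] eH[OF that(2)] eH[OF that(1)]] by simp
    also have "\<dots> = zr (A k) (A j)"
      using eO[OF that] comp_zr_l[OF S(2)[OF that(2)] X] comp_zr_r[OF S(3)[OF that(1)] S(1)[OF that(2)]] by simp
    finally show ?thesis .
  qed
  have sum: "foldr (\<lambda>k acc. ad (cmp (\<iota> k) (\<pi> k)) acc) [0..<n0] (zr X X) = idm X"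
  proof -
    have "foldr (\<lambda>k acc. ad (cmp (\<iota> k) (\<pi> k)) acc) [0..<n0] (zr X X) = vs D (\<lambda>k. cmp (\<iota> k) (\<pi> k)) [0..<n0] X X"
      by (simp add: vs_def)
    also have "\<dots> = vs D e [0..<n0] X X" by (rule vs_cong) (use S in auto)
    finally show ?thesis using se by simp
  qed
  have nb: "nbiprod D A n0 X \<iota> \<pi>"
    unfolding nbiprod_def using X S orth sum by auto
  have ind: "indecomposable D (A k)" if k: "k < n0" for k
  proof -
    have nzA: "\<not> is_zero_obj D (A k)" using zero_split[OF S(1-3)[OF k] S(5)[OF k]] eN[OF k] by blast
    have "\<not> (\<exists>A1 A2 i1 i2 p1 p2. \<not> is_zero_obj D A1 \<and> \<not> is_zero_obj D A2 \<and> biprod D A1 A2 (A k) i1 i2 p1 p2)"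
    proof
      assume "\<exists>A1 A2 i1 i2 p1 p2. \<not> is_zero_obj D A1 \<and> \<not> is_zero_obj D A2 \<and> biprod D A1 A2 (A k) i1 i2 p1 p2"
      then obtain A1 A2 i1 i2 p1 p2 where bp: "biprod D A1 A2 (A k) i1 i2 p1 p2"
        and nz: "\<not> is_zero_obj D A1" "\<not> is_zero_obj D A2" by blast
      from refine[OF X oe se k S(2-5)[OF k] bp nz] have "fam (Suc n0)" unfolding fam_def by blast
      with maxn show False by fastforce
    qed
    then show ?thesis unfolding indecomposable_def using S(1)[OF k] nzA by blast
  qed
  show ?thesis using nb ind by blast
qed

theorem KS_abstract:
  assumes "idem_split D" "oidem_bounded D" "poly_annih D"
  shows "krull_schmidt D"
  unfolding krull_schmidt_def using decomp_exists[OF assms(1,2)] local_end_ind[OF assms(1,3)] by blast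

end

lemma lh0: "linear_homs C \<Longrightarrow> linear_homs0 C"
  unfolding linear_homs_def linear_homs0_def
  apply (intro ballI)
  apply (drule_tac x=X in bspec, assumption)
  apply (drule_tac x=Y in bspec, assumption)
  apply (elim conjE)
  apply (intro conjI)
  apply assumption+
  done

lemma lac_prelin: "linear_abelian_cat C \<Longrightarrow> prelin C"
  unfolding linear_abelian_cat_def prelin_def using lh0 by blast

locale fdcat = prelin D for D :: "('o, 'm, 'k::field) lcat" +
  assumes fin: "linear_homs D" and kers: "\<forall>f\<in>cMor D. \<exists>k. is_kernel D f k"
begin

lemma split_C:
  assumes X: "X \<in> Ob" and e: "e \<in> H X X" and ee: "cmp e e = e"
  shows "\<exists>A \<iota> \<pi>. A \<in> Ob \<and> \<iota> \<in> H A X \<and> \<pi> \<in> H X A \<and> cmp \<pi> \<iota> = idm A \<and> cmp \<iota> \<pi> = e"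
proof -
  define u where "u = ad (idm X) (sm (-1) e)"
  note cf = compl_facts[OF X e ee, folded u_def]
  have uM: "u \<in> cMor D" using hom_mor[OF cf(1)] .
  obtain k where k: "is_kernel D u k" using kers uM by blast
  define K where "K = cDom D k"
  have kM: "k \<in> cMor D" and kc: "cCod D k = X" and uk: "cmp u k = zr K X"
    and univ: "\<And>g. g \<in> cMor D \<Longrightarrow> cCod D g = X \<Longrightarrow> cmp u g = zr (cDom D g) X \<Longrightarrow>
        \<exists>!h. h \<in> H (cDom D g) K \<and> cmp k h = g"
    using k hom_dom[OF cf(1)] hom_cod[OF cf(1)] unfolding is_kernel_def K_def by auto
  have K: "K \<in> Ob" using cat kM unfolding is_category_def K_def by blast
  have kH: "k \<in> H K X" using kM kc unfolding hom_def K_def by simp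
  have "\<exists>!h. h \<in> H X K \<and> cmp k h = e"
    using univ[OF hom_mor[OF e] hom_cod[OF e]] cf(3) hom_dom[OF e] by simp
  then obtain r where r: "r \<in> H X K" "cmp k r = e" by blast
  have ek: "cmp e k = k"
  proof -
    have "cmp u k = ad k (sm (-1) (cmp e k))"
      unfolding u_def using comp_addl[OF kH id_hom[OF X] sm_hom[OF e]] comp_sml[OF kH e] id_l[OF kH] by simp
    then have "ad k (sm (-1) (cmp e k)) = zr K X" using uk by simp
    from diff_zero_eq[OF kH comp_hom[OF kH e] this] show ?thesis by simp
  qed
  have u1: "\<exists>!h. h \<in> H K K \<and> cmp k h = k"
    using univ[OF kM kc] uk unfolding K_def by simp
  have "cmp k (cmp r k) = k" using assoc[OF kH r(1) kH] r(2) ek by simp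
  moreover have "cmp k (idm K) = k" using kH by simp
  ultimately have "cmp r k = idm K" using u1 comp_hom[OF kH r(1)] id_hom[OF K] by blast
  then show ?thesis using K kH r by blast
qed

lemma idem_split_C: "idem_split D"
  unfolding idem_split_def using split_C by blast

lemma vs_map: "vs D g (map h ks) X Y = vs D (\<lambda>i. g (h i)) ks X Y"
  by (induction ks) auto

lemma lin_comb_vs: "length cs = length bs \<Longrightarrow>
    lin_comb D X Y bs cs = vs D (\<lambda>j. sm (cs ! j) (bs ! j)) [0..<length bs] X Y"
proof (induction bs arbitrary: cs)
  case Nil then show ?case by (simp add: lin_comb_def)
next
  case (Cons b bs)
  then obtain c cs' where cs: "cs = c # cs'" "length cs' = length bs" by (cases cs) auto
  have u1: "[0..<Suc (length bs)] = 0 # [Suc 0..<Suc (length bs)]" by (rule upt_conv_Cons) simp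
  have "map Suc [0..<length bs] = [Suc 0..<Suc (length bs)]" by (rule map_Suc_upt)
  then have "[0..<length (b # bs)] = 0 # map Suc [0..<length bs]" using u1 by simp
  then show ?case using Cons.IH[OF cs(2)] cs by (simp add: lin_comb_def vs_map)
qed

lemma sm0_nth: "set bs \<subseteq> H X Y \<Longrightarrow> k < length bs \<Longrightarrow> sm 0 (bs ! k) = zr X Y"
  by (rule sm_zero) (use nth_mem in blast)

definition lcf :: "'m list \<Rightarrow> (nat \<Rightarrow> 'k) \<Rightarrow> 'o \<Rightarrow> 'o \<Rightarrow> 'm" where
  "lcf bs w X Y = vs D (\<lambda>j. sm (w j) (bs ! j)) [0..<length bs] X Y"

lemma coords:
  assumes "X \<in> Ob" "Y \<in> Ob"
  shows "\<exists>bs. set bs \<subseteq> H X Y \<and> (\<forall>f\<in>H X Y. \<exists>w. (\<forall>j\<ge>length bs. w j = 0) \<and> f = lcf bs w X Y)"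
proof -
  have "\<exists>bs. set bs \<subseteq> H X Y \<and> (\<forall>f\<in>H X Y. \<exists>cs. length cs = length bs \<and> f = lin_comb D X Y bs cs)"
    using bspec[OF bspec[OF fin[unfolded linear_homs_def] assms(1)] assms(2)] by (elim conjE) assumption
  then obtain bs where bs: "set bs \<subseteq> H X Y" "\<forall>f\<in>H X Y. \<exists>cs. length cs = length bs \<and> f = lin_comb D X Y bs cs"
    by blast
  have "\<exists>w. (\<forall>j\<ge>length bs. w j = 0) \<and> f = lcf bs w X Y" if f: "f \<in> H X Y" for f
  proof -
    obtain cs where cs: "length cs = length bs" "f = lin_comb D X Y bs cs" using bs(2) f by blast
    define w where "w j = (if j < length bs then cs ! j else 0)" for j
    have "f = lcf bs w X Y" unfolding cs(2) lin_comb_vs[OF cs(1)] lcf_def by (rule vs_cong) (auto simp: w_def)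
    then show ?thesis by (intro exI[of _ w]) (auto simp: w_def)
  qed
  then show ?thesis using bs(1) by blast
qed

lemma lcf_lin:
  assumes X: "X \<in> Ob" "Y \<in> Ob" and bs: "set bs \<subseteq> H X Y"
  shows "vs D (\<lambda>i. sm (c i) (lcf bs (W i) X Y)) [0..<n] X Y = lcf bs (\<lambda>j. \<Sum>i<n. c i * W i j) X Y"
proof (induction n)
  case 0
  have "lcf bs (\<lambda>j. 0) X Y = zr X Y" unfolding lcf_def
    by (rule vs_zero[OF X]) (use bs sm0_nth in auto)
  then show ?case using X by simp
next
  case (Suc n)
  have bH: "\<And>j. j \<in> set [0..<length bs] \<Longrightarrow> bs ! j \<in> H X Y" using bs by auto
  have lH: "lcf bs w X Y \<in> H X Y" for w unfolding lcf_def by (rule vs_hom[OF X]) (use bH sm_hom in auto)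
  have "vs D (\<lambda>i. sm (c i) (lcf bs (W i) X Y)) [0..<Suc n] X Y =
        ad (lcf bs (\<lambda>j. \<Sum>i<n. c i * W i j) X Y) (sm (c n) (lcf bs (W n) X Y))"
    using vs_append[OF X, where g="\<lambda>i. sm (c i) (lcf bs (W i) X Y)" and xs="[0..<n]" and ys="[n]"]
      Suc sm_hom[OF lH] add_zr[OF sm_hom[OF lH]] by simp
  also have "sm (c n) (lcf bs (W n) X Y) = lcf bs (\<lambda>j. c n * W n j) X Y"
  proof -
    have "sm (c n) (lcf bs (W n) X Y) = vs D (\<lambda>k. sm (c n) (sm (W n k) (bs ! k))) [0..<length bs] X Y"
      unfolding lcf_def by (rule vs_sm[OF X]) (use bH sm_hom in auto)
    also have "\<dots> = lcf bs (\<lambda>j. c n * W n j) X Y" unfolding lcf_def by (rule vs_cong) (auto simp: sm_sm[OF bH])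
    finally show ?thesis .
  qed
  also have "ad (lcf bs (\<lambda>j. \<Sum>i<n. c i * W i j) X Y) (lcf bs (\<lambda>j. c n * W n j) X Y)
       = lcf bs (\<lambda>j. \<Sum>i<Suc n. c i * W i j) X Y"
  proof -
    have "ad (lcf bs (\<lambda>j. \<Sum>i<n. c i * W i j) X Y) (lcf bs (\<lambda>j. c n * W n j) X Y)
        = vs D (\<lambda>j. ad (sm (\<Sum>i<n. c i * W i j) (bs ! j)) (sm (c n * W n j) (bs ! j))) [0..<length bs] X Y"
      unfolding lcf_def by (rule vs_add[OF X, symmetric]) (use bH sm_hom in auto)
    also have "\<dots> = lcf bs (\<lambda>j. \<Sum>i<Suc n. c i * W i j) X Y"
      unfolding lcf_def by (rule vs_cong) (auto simp: sm_addl[OF bH])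
    finally show ?thesis .
  qed
  finally show ?case .
qed

lemma dep:
  assumes X: "X \<in> Ob" "Y \<in> Ob"
  shows "\<exists>d. \<forall>n v. d < n \<longrightarrow> (\<forall>i<n. v i \<in> H X Y) \<longrightarrow>
            (\<exists>c. (\<exists>i<n. c i \<noteq> 0) \<and> vs D (\<lambda>i. sm (c i) (v i)) [0..<n] X Y = zr X Y)"
proof -
  obtain bs where bs: "set bs \<subseteq> H X Y" "\<forall>f\<in>H X Y. \<exists>w. (\<forall>j\<ge>length bs. w j = 0) \<and> f = lcf bs w X Y"
    using coords[OF X] by blast
  have "\<exists>c. (\<exists>i<n. c i \<noteq> 0) \<and> vs D (\<lambda>i. sm (c i) (v i)) [0..<n] X Y = zr X Y"
    if n: "length bs < n" and v: "\<forall>i<n. v i \<in> H X Y" for n v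
  proof -
    have "\<forall>i. \<exists>w. i < n \<longrightarrow> (\<forall>j\<ge>length bs. w j = 0) \<and> v i = lcf bs w X Y" using v bs(2) by blast
    then obtain W where W: "\<And>i. i < n \<Longrightarrow> (\<forall>j\<ge>length bs. W i j = 0) \<and> v i = lcf bs (W i) X Y"
      by (metis choice)
    obtain c where c: "\<exists>i<n. c i \<noteq> 0" "\<forall>j. (\<Sum>i<n. c i * W i j) = 0"
      using fun_dep[of n "length bs" W] W n by blast
    have "vs D (\<lambda>i. sm (c i) (v i)) [0..<n] X Y = vs D (\<lambda>i. sm (c i) (lcf bs (W i) X Y)) [0..<n] X Y"
      by (rule vs_cong) (use W in auto)
    also have "\<dots> = lcf bs (\<lambda>j. \<Sum>i<n. c i * W i j) X Y" by (rule lcf_lin[OF X bs(1)])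
    also have "\<dots> = zr X Y" unfolding lcf_def using c(2) 
      by (simp, intro vs_zero[OF X]) (use bs(1) sm0_nth in auto)
    finally show ?thesis using c(1) by blast
  qed
  then show ?thesis by blast
qed

lemma oidem_bounded_C: "oidem_bounded D"
  unfolding oidem_bounded_def
proof
  fix X assume X: "X \<in> Ob"
  obtain d where d: "\<And>n v. d < n \<Longrightarrow> (\<forall>i<n. v i \<in> H X X) \<Longrightarrow>
            (\<exists>c. (\<exists>i<n. c i \<noteq> 0) \<and> vs D (\<lambda>i. sm (c i) (v i)) [0..<n] X X = zr X X)"
    using dep[OF X X] by blast
  have "card K \<le> d" if K: "finite K" and oe: "oidem D X K e" for K e
  proof (rule ccontr)
    assume "\<not> card K \<le> d"
    then have dn: "d < card K" by simp
    obtain h where h: "bij_betw h {0..<card K} K" using ex_bij_betw_nat_finite[OF K] by blast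
    define v where "v i = e (h i)" for i
    have hK: "i < card K \<Longrightarrow> h i \<in> K" for i using h unfolding bij_betw_def by auto
    have hinj: "i < card K \<Longrightarrow> j < card K \<Longrightarrow> i \<noteq> j \<Longrightarrow> h i \<noteq> h j" for i j
      using h unfolding bij_betw_def inj_on_def by auto
    have vH: "\<And>i. i < card K \<Longrightarrow> v i \<in> H X X" and vI: "\<And>i. i < card K \<Longrightarrow> cmp (v i) (v i) = v i"
      and vN: "\<And>i. i < card K \<Longrightarrow> v i \<noteq> zr X X"
      and vO: "\<And>i j. i < card K \<Longrightarrow> j < card K \<Longrightarrow> i \<noteq> j \<Longrightarrow> cmp (v i) (v j) = zr X X"
      using oe hK hinj unfolding oidem_def v_def by auto
    obtain c j where c: "j < card K" "c j \<noteq> 0" "vs D (\<lambda>i. sm (c i) (v i)) [0..<card K] X X = zr X X"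
      using d[OF dn] vH by blast
    have "zr X X = cmp (v j) (vs D (\<lambda>i. sm (c i) (v i)) [0..<card K] X X)"
      using c(3) comp_zr_r[OF vH[OF c(1)] X] by simp
    also have "\<dots> = vs D (\<lambda>i. cmp (v j) (sm (c i) (v i))) [0..<card K] X X"
      by (rule vs_comp_l[OF vH[OF c(1)] X]) (use vH sm_hom in auto)
    also have "\<dots> = cmp (v j) (sm (c j) (v j))"
    proof (rule vs_single[OF X X])
      show "\<forall>k\<in>set [0..<card K]. k \<noteq> j \<longrightarrow> cmp (v j) (sm (c k) (v k)) = zr X X"
      proof (intro ballI impI)
        fix k assume k: "k \<in> set [0..<card K]" "k \<noteq> j"
        then have kK: "k < card K" by simp
        have "cmp (v j) (sm (c k) (v k)) = sm (c k) (cmp (v j) (v k))" using comp_smr[OF vH[OF kK] vH[OF c(1)]] .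
        also have "\<dots> = zr X X" using vO[OF c(1) kK] k(2) sm_zr[OF X X] by simp
        finally show "cmp (v j) (sm (c k) (v k)) = zr X X" .
      qed
      show "cmp (v j) (sm (c j) (v j)) \<in> H X X" using comp_hom[OF sm_hom vH] vH c(1) by blast
    qed (use c(1) in auto)
    also have "\<dots> = sm (c j) (v j)" using comp_smr[OF vH[OF c(1)] vH[OF c(1)]] vI[OF c(1)] by simp
    finally have "v j = zr X X" using sm_eq_zr[OF vH[OF c(1)] _ c(2)] by simp
    with vN[OF c(1)] show False by simp
  qed
  then show "\<exists>N. \<forall>K e. finite K \<longrightarrow> oidem D X K e \<longrightarrow> card K \<le> N" by blast
qed

lemma peval_sum: assumes X: "X \<in> Ob" and f: "f \<in> H X X"
  shows "peval D X (\<Sum>i<n. monom (c i) i) f = vs D (\<lambda>i. sm (c i) (peval D X (monom 1 i) f)) [0..<n] X X"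
proof (induction n)
  case 0 then show ?case by simp
next
  case (Suc n)
  have pH: "\<And>q. peval D X q f \<in> H X X" using peval_hom[OF X f] .
  have "peval D X (\<Sum>i<Suc n. monom (c i) i) f = ad (peval D X (\<Sum>i<n. monom (c i) i) f) (peval D X (monom (c n) n) f)"
    by (simp add: peval_add[OF X f])
  also have "peval D X (monom (c n) n) f = sm (c n) (peval D X (monom 1 n) f)"
    using peval_smult[OF X f, of "c n" "monom 1 n"] by (simp add: smult_monom)
  finally show ?case
    using Suc vs_append[OF X X, where g="\<lambda>i. sm (c i) (peval D X (monom 1 i) f)" and xs="[0..<n]" and ys="[n]"]
      sm_hom pH add_zr[OF sm_hom[OF pH]] by simp
qed

lemma poly_annih_C: "poly_annih D"
  unfolding poly_annih_def
proof (intro ballI)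
  fix X f assume X: "X \<in> Ob" and f: "f \<in> H X X"
  obtain d where d: "\<And>n v. d < n \<Longrightarrow> (\<forall>i<n. v i \<in> H X X) \<Longrightarrow>
            (\<exists>c. (\<exists>i<n. c i \<noteq> 0) \<and> vs D (\<lambda>i. sm (c i) (v i)) [0..<n] X X = zr X X)"
    using dep[OF X X] by blast
  obtain c where c: "\<exists>i<Suc d. c i \<noteq> 0"
    "vs D (\<lambda>i. sm (c i) (peval D X (monom 1 i) f)) [0..<Suc d] X X = zr X X"
    using d[of "Suc d" "\<lambda>i. peval D X (monom 1 i) f"] peval_hom[OF X f] by blast
  define P where "P = (\<Sum>i<Suc d. monom (c i) i)"
  have "P \<noteq> 0"
  proof
    assume "P = 0"
    from c(1) obtain i where i: "i < Suc d" "c i \<noteq> 0" by blast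
    have "coeff P i = c i" unfolding P_def coeff_sum using i(1)
      by (simp add: coeff_monom sum.delta)
    with \<open>P = 0\<close> i(2) show False by simp
  qed
  moreover have "peval D X P f = zr X X" unfolding P_def peval_sum[OF X f] using c(2) .
  ultimately show "\<exists>P. P \<noteq> 0 \<and> peval D X P f = zr X X" by blast
qed

end

context prelin
begin

abbreviation "TP L \<equiv> tempered_pers_cat D L"

lemma TP_simps[simp]:
  "cObj (TP L) = {P. pers_obj D L P \<and> tempered D P}"
  "cDom (TP L) m = fst m" "cCod (TP L) m = fst (snd m)"
  "cComp (TP L) (Q', R, g) (P, Q, f) = (P, R, \<lambda>p. cmp (g p) (f p))"
  "cId (TP L) P = (P, P, \<lambda>p. idm (fst P p))"
  "cAdd (TP L) (P, Q, f) (P', Q', g) = (P, Q, \<lambda>p. ad (f p) (g p))"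
  "cZero (TP L) P Q = (P, Q, \<lambda>p. zr (fst P p) (fst Q p))"
  "cSmul (TP L) a (P, Q, f) = (P, Q, \<lambda>p. sm a (f p))"
  by (simp_all add: tempered_pers_cat_def)

lemma homT: "m \<in> hom (TP L) P Q \<longleftrightarrow>
    (\<exists>f. m = (P, Q, f) \<and> P \<in> cObj (TP L) \<and> Q \<in> cObj (TP L) \<and> pers_mor D L P Q f)"
  unfolding hom_def tempered_pers_cat_def by auto

lemma pobj_ob: "pers_obj D L P \<Longrightarrow> fst P p \<in> Ob" by (simp add: pers_obj_def)
lemma pobj_L: "pers_obj D L P \<Longrightarrow> p \<in> L \<Longrightarrow> snd P p \<in> H (fst P p) (fst P (p - 1))"
  unfolding pers_obj_def by (metis (full_types))
lemma pobj_nL: "pers_obj D L P \<Longrightarrow> p \<notin> L \<Longrightarrow> snd P p \<in> H (fst P (p - 1)) (fst P p)"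
  unfolding pers_obj_def by (metis (full_types))
lemma pmor_hom: "pers_mor D L P Q f \<Longrightarrow> f p \<in> H (fst P p) (fst Q p)" by (simp add: pers_mor_def)
lemma pmor_L: "pers_mor D L P Q f \<Longrightarrow> p \<in> L \<Longrightarrow> cmp (f (p - 1)) (snd P p) = cmp (snd Q p) (f p)"
  unfolding pers_mor_def by (metis (full_types))
lemma pmor_nL: "pers_mor D L P Q f \<Longrightarrow> p \<notin> L \<Longrightarrow> cmp (f p) (snd P p) = cmp (snd Q p) (f (p - 1))"
  unfolding pers_mor_def by (metis (full_types))
lemma pmorI:
  assumes "\<And>p. f p \<in> H (fst P p) (fst Q p)"
    "\<And>p. p \<in> L \<Longrightarrow> cmp (f (p - 1)) (snd P p) = cmp (snd Q p) (f p)"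
    "\<And>p. p \<notin> L \<Longrightarrow> cmp (f p) (snd P p) = cmp (snd Q p) (f (p - 1))"
  shows "pers_mor D L P Q f"
  unfolding pers_mor_def using assms by auto

lemma pm_comp:
  assumes P: "pers_obj D L P" and Q: "pers_obj D L Q" and R: "pers_obj D L R"
    and f: "pers_mor D L P Q f" and g: "pers_mor D L Q R g"
  shows "pers_mor D L P R (\<lambda>p. cmp (g p) (f p))"
proof (rule pmorI)
  fix p
  note fh = pmor_hom[OF f] and gh = pmor_hom[OF g]
  show "cmp (g p) (f p) \<in> H (fst P p) (fst R p)" using comp_hom[OF fh gh] .
  {
    assume p: "p \<in> L"
    note x = pobj_L[OF P p] and y = pobj_L[OF Q p] and z = pobj_L[OF R p]
    have "cmp (cmp (g (p - 1)) (f (p - 1))) (snd P p) = cmp (g (p - 1)) (cmp (f (p - 1)) (snd P p))"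
      using assoc[OF x fh gh] by simp
    also have "\<dots> = cmp (g (p - 1)) (cmp (snd Q p) (f p))" using pmor_L[OF f p] by simp
    also have "\<dots> = cmp (cmp (g (p - 1)) (snd Q p)) (f p)" using assoc[OF fh y gh] by simp
    also have "\<dots> = cmp (cmp (snd R p) (g p)) (f p)" using pmor_L[OF g p] by simp
    also have "\<dots> = cmp (snd R p) (cmp (g p) (f p))" using assoc[OF fh gh z] by simp
    finally show "cmp (cmp (g (p - 1)) (f (p - 1))) (snd P p) = cmp (snd R p) (cmp (g p) (f p))" .
  }
  {
    assume p: "p \<notin> L"
    note x = pobj_nL[OF P p] and y = pobj_nL[OF Q p] and z = pobj_nL[OF R p]
    have "cmp (cmp (g p) (f p)) (snd P p) = cmp (g p) (cmp (f p) (snd P p))"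
      using assoc[OF x fh gh] by simp
    also have "\<dots> = cmp (g p) (cmp (snd Q p) (f (p - 1)))" using pmor_nL[OF f p] by simp
    also have "\<dots> = cmp (cmp (g p) (snd Q p)) (f (p - 1))" using assoc[OF fh y gh] by simp
    also have "\<dots> = cmp (cmp (snd R p) (g (p - 1))) (f (p - 1))" using pmor_nL[OF g p] by simp
    also have "\<dots> = cmp (snd R p) (cmp (g (p - 1)) (f (p - 1)))" using assoc[OF fh gh z] by simp
    finally show "cmp (cmp (g p) (f p)) (snd P p) = cmp (snd R p) (cmp (g (p - 1)) (f (p - 1)))" .
  }
qed

lemma pm_id: assumes P: "pers_obj D L P" shows "pers_mor D L P P (\<lambda>p. idm (fst P p))"
proof (rule pmorI)
  fix p
  show "idm (fst P p) \<in> H (fst P p) (fst P p)" using pobj_ob[OF P] by simp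
  show "cmp (idm (fst P (p - 1))) (snd P p) = cmp (snd P p) (idm (fst P p))" if "p \<in> L"
    using pobj_L[OF P that] by simp
  show "cmp (idm (fst P p)) (snd P p) = cmp (snd P p) (idm (fst P (p - 1)))" if "p \<notin> L"
    using pobj_nL[OF P that] by simp
qed

lemma pm_zero: assumes P: "pers_obj D L P" and Q: "pers_obj D L Q"
  shows "pers_mor D L P Q (\<lambda>p. zr (fst P p) (fst Q p))"
proof (rule pmorI)
  fix p
  show "zr (fst P p) (fst Q p) \<in> H (fst P p) (fst Q p)" using pobj_ob[OF P] pobj_ob[OF Q] by simp
  show "cmp (zr (fst P (p - 1)) (fst Q (p - 1))) (snd P p) = cmp (snd Q p) (zr (fst P p) (fst Q p))" if "p \<in> L"
    using comp_zr_l[OF pobj_L[OF P that] pobj_ob[OF Q]] comp_zr_r[OF pobj_L[OF Q that] pobj_ob[OF P]] by simp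
  show "cmp (zr (fst P p) (fst Q p)) (snd P p) = cmp (snd Q p) (zr (fst P (p - 1)) (fst Q (p - 1)))" if "p \<notin> L"
    using comp_zr_l[OF pobj_nL[OF P that] pobj_ob[OF Q]] comp_zr_r[OF pobj_nL[OF Q that] pobj_ob[OF P]] by simp
qed

lemma pm_add: assumes P: "pers_obj D L P" and Q: "pers_obj D L Q"
  and f: "pers_mor D L P Q f" and g: "pers_mor D L P Q g"
  shows "pers_mor D L P Q (\<lambda>p. ad (f p) (g p))"
proof (rule pmorI)
  fix p
  note fh = pmor_hom[OF f] and gh = pmor_hom[OF g]
  show "ad (f p) (g p) \<in> H (fst P p) (fst Q p)" using add_hom[OF fh gh] .
  show "cmp (ad (f (p - 1)) (g (p - 1))) (snd P p) = cmp (snd Q p) (ad (f p) (g p))" if "p \<in> L"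
    using comp_addl[OF pobj_L[OF P that] fh gh] comp_addr[OF fh gh pobj_L[OF Q that]] pmor_L[OF f that] pmor_L[OF g that]
    by simp
  show "cmp (ad (f p) (g p)) (snd P p) = cmp (snd Q p) (ad (f (p - 1)) (g (p - 1)))" if "p \<notin> L"
    using comp_addl[OF pobj_nL[OF P that] fh gh] comp_addr[OF fh gh pobj_nL[OF Q that]] pmor_nL[OF f that] pmor_nL[OF g that]
    by simp
qed

lemma pm_sm: assumes P: "pers_obj D L P" and Q: "pers_obj D L Q"
  and f: "pers_mor D L P Q f"
  shows "pers_mor D L P Q (\<lambda>p. sm a (f p))"
proof (rule pmorI)
  fix p
  note fh = pmor_hom[OF f]
  show "sm a (f p) \<in> H (fst P p) (fst Q p)" using sm_hom[OF fh] .
  show "cmp (sm a (f (p - 1))) (snd P p) = cmp (snd Q p) (sm a (f p))" if "p \<in> L"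
    using comp_sml[OF pobj_L[OF P that] fh] comp_smr[OF fh pobj_L[OF Q that]] pmor_L[OF f that] by simp
  show "cmp (sm a (f p)) (snd P p) = cmp (snd Q p) (sm a (f (p - 1)))" if "p \<notin> L"
    using comp_sml[OF pobj_nL[OF P that] fh] comp_smr[OF fh pobj_nL[OF Q that]] pmor_nL[OF f that] by simp
qed

lemma prelinT: "prelin (TP L)"
  unfolding prelin_def
proof (intro conjI)
  show "is_category (TP L)"
    unfolding is_category_def
  proof (intro conjI ballI)
    fix f assume "f \<in> cMor (TP L)"
    then show "cDom (TP L) f \<in> cObj (TP L)"
      by (auto simp: tempered_pers_cat_def)
  next
    fix f assume "f \<in> cMor (TP L)"
    then show "cCod (TP L) f \<in> cObj (TP L)"
      by (auto simp: tempered_pers_cat_def)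
  next
    fix X assume "X \<in> cObj (TP L)"
    then show "cId (TP L) X \<in> hom (TP L) X X" using pm_id by (auto simp: homT)
  next
    fix X Y Z f g assume o: "X \<in> cObj (TP L)" "Y \<in> cObj (TP L)" "Z \<in> cObj (TP L)"
      and fg: "f \<in> hom (TP L) X Y" "g \<in> hom (TP L) Y Z"
    then obtain f' g' where e: "f = (X, Y, f')" "g = (Y, Z, g')" and m: "pers_mor D L X Y f'" "pers_mor D L Y Z g'"
      by (auto simp: homT)
    have "pers_mor D L X Z (\<lambda>p. cmp (g' p) (f' p))" by (rule pm_comp) (use o m in auto)
    then show "cComp (TP L) g f \<in> hom (TP L) X Z" using o e by (auto simp: homT)
  next
    fix W X Y Z f g h assume o: "W \<in> cObj (TP L)" "X \<in> cObj (TP L)" "Y \<in> cObj (TP L)" "Z \<in> cObj (TP L)"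
      and fgh: "f \<in> hom (TP L) W X" "g \<in> hom (TP L) X Y" "h \<in> hom (TP L) Y Z"
    then obtain f' g' h' where e: "f = (W, X, f')" "g = (X, Y, g')" "h = (Y, Z, h')"
      and m: "pers_mor D L W X f'" "pers_mor D L X Y g'" "pers_mor D L Y Z h'"
      by (auto simp: homT)
    show "cComp (TP L) h (cComp (TP L) g f) = cComp (TP L) (cComp (TP L) h g) f"
      using e assoc[OF pmor_hom[OF m(1)] pmor_hom[OF m(2)] pmor_hom[OF m(3)]] by simp
  next
    fix X Y f assume o: "X \<in> cObj (TP L)" "Y \<in> cObj (TP L)" and f: "f \<in> hom (TP L) X Y"
    then obtain f' where e: "f = (X, Y, f')" and m: "pers_mor D L X Y f'" by (auto simp: homT)
    show "cComp (TP L) f (cId (TP L) X) = f"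
      using e id_r[OF pmor_hom[OF m]] by simp
  next
    fix X Y f assume o: "X \<in> cObj (TP L)" "Y \<in> cObj (TP L)" and f: "f \<in> hom (TP L) X Y"
    then obtain f' where e: "f = (X, Y, f')" and m: "pers_mor D L X Y f'" by (auto simp: homT)
    show "cComp (TP L) (cId (TP L) Y) f = f"
      using e id_l[OF pmor_hom[OF m]] by simp
  qed
  show "linear_homs0 (TP L)"
    unfolding linear_homs0_def
  proof (intro ballI)
    fix X Y assume o: "X \<in> cObj (TP L)" "Y \<in> cObj (TP L)"
    have PX: "pers_obj D L X" "pers_obj D L Y" using o by auto
    have B: "(\<forall>f\<in>hom (TP L) X Y. R f) \<longleftrightarrow> (\<forall>f. pers_mor D L X Y f \<longrightarrow> R (X, Y, f))" for R
      using o by (auto simp: homT)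
    show "cZero (TP L) X Y \<in> hom (TP L) X Y \<and>
     (\<forall>f\<in>hom (TP L) X Y. \<forall>g\<in>hom (TP L) X Y. cAdd (TP L) f g \<in> hom (TP L) X Y) \<and>
     (\<forall>a. \<forall>f\<in>hom (TP L) X Y. cSmul (TP L) a f \<in> hom (TP L) X Y) \<and>
     (\<forall>f\<in>hom (TP L) X Y. \<forall>g\<in>hom (TP L) X Y. \<forall>h\<in>hom (TP L) X Y.
        cAdd (TP L) (cAdd (TP L) f g) h = cAdd (TP L) f (cAdd (TP L) g h)) \<and>
     (\<forall>f\<in>hom (TP L) X Y. \<forall>g\<in>hom (TP L) X Y. cAdd (TP L) f g = cAdd (TP L) g f) \<and>
     (\<forall>f\<in>hom (TP L) X Y. cAdd (TP L) f (cZero (TP L) X Y) = f) \<and>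
     (\<forall>f\<in>hom (TP L) X Y. cAdd (TP L) f (cSmul (TP L) (-1) f) = cZero (TP L) X Y) \<and>
     (\<forall>f\<in>hom (TP L) X Y. cSmul (TP L) 1 f = f) \<and>
     (\<forall>a b. \<forall>f\<in>hom (TP L) X Y. cSmul (TP L) a (cSmul (TP L) b f) = cSmul (TP L) (a * b) f) \<and>
     (\<forall>a b. \<forall>f\<in>hom (TP L) X Y. cSmul (TP L) (a + b) f = cAdd (TP L) (cSmul (TP L) a f) (cSmul (TP L) b f)) \<and>
     (\<forall>a. \<forall>f\<in>hom (TP L) X Y. \<forall>g\<in>hom (TP L) X Y.
        cSmul (TP L) a (cAdd (TP L) f g) = cAdd (TP L) (cSmul (TP L) a f) (cSmul (TP L) a g))"
      unfolding B
    proof (intro conjI allI impI)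
      show "cZero (TP L) X Y \<in> hom (TP L) X Y" using o pm_zero[OF PX] by (auto simp: homT)
      fix f g h a b
      assume f: "pers_mor D L X Y f"
      note fh = pmor_hom[OF f]
      show "cSmul (TP L) a (X, Y, f) \<in> hom (TP L) X Y" using o pm_sm[OF PX f] by (auto simp: homT)
      show "cAdd (TP L) (X, Y, f) (cZero (TP L) X Y) = (X, Y, f)" using add_zr[OF fh] by simp
      show "cAdd (TP L) (X, Y, f) (cSmul (TP L) (-1) (X, Y, f)) = cZero (TP L) X Y" using add_neg[OF fh] by simp
      show "cSmul (TP L) 1 (X, Y, f) = (X, Y, f)" using sm_one[OF fh] by simp
      show "cSmul (TP L) a (cSmul (TP L) b (X, Y, f)) = cSmul (TP L) (a * b) (X, Y, f)" using sm_sm[OF fh] by simp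
      show "cSmul (TP L) (a + b) (X, Y, f) = cAdd (TP L) (cSmul (TP L) a (X, Y, f)) (cSmul (TP L) b (X, Y, f))"
        using sm_addl[OF fh] by simp
      assume g: "pers_mor D L X Y g"
      note gh = pmor_hom[OF g]
      show "cAdd (TP L) (X, Y, f) (X, Y, g) \<in> hom (TP L) X Y" using o pm_add[OF PX f g] by (auto simp: homT)
      show "cAdd (TP L) (X, Y, f) (X, Y, g) = cAdd (TP L) (X, Y, g) (X, Y, f)" using add_comm[OF fh gh] by simp
      show "cSmul (TP L) a (cAdd (TP L) (X, Y, f) (X, Y, g)) =
          cAdd (TP L) (cSmul (TP L) a (X, Y, f)) (cSmul (TP L) a (X, Y, g))" using sm_addr[OF fh gh] by simp
      assume h: "pers_mor D L X Y h"
      show "cAdd (TP L) (cAdd (TP L) (X, Y, f) (X, Y, g)) (X, Y, h) = cAdd (TP L) (X, Y, f) (cAdd (TP L) (X, Y, g) (X, Y, h))"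
        using add_assoc[OF fh gh pmor_hom[OF h]] by simp
    qed
  qed
  show "bilinear_comp (TP L)"
    unfolding bilinear_comp_def
  proof (intro ballI allI conjI)
    fix X Y Z f f' g g' a
    assume o: "X \<in> cObj (TP L)" "Y \<in> cObj (TP L)" "Z \<in> cObj (TP L)"
      and h: "f \<in> hom (TP L) X Y" "f' \<in> hom (TP L) X Y" "g \<in> hom (TP L) Y Z" "g' \<in> hom (TP L) Y Z"
    then obtain F F' G G' where e: "f = (X, Y, F)" "f' = (X, Y, F')" "g = (Y, Z, G)" "g' = (Y, Z, G')"
      and m: "pers_mor D L X Y F" "pers_mor D L X Y F'" "pers_mor D L Y Z G" "pers_mor D L Y Z G'"
      by (auto simp: homT)
    note hs = pmor_hom[OF m(1)] pmor_hom[OF m(2)] pmor_hom[OF m(3)] pmor_hom[OF m(4)]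
    show "cComp (TP L) g (cAdd (TP L) f f') = cAdd (TP L) (cComp (TP L) g f) (cComp (TP L) g f')"
      using e comp_addr[OF hs(1) hs(2) hs(3)] by simp
    show "cComp (TP L) (cAdd (TP L) g g') f = cAdd (TP L) (cComp (TP L) g f) (cComp (TP L) g' f)"
      using e comp_addl[OF hs(1) hs(3) hs(4)] by simp
    show "cComp (TP L) g (cSmul (TP L) a f) = cSmul (TP L) a (cComp (TP L) g f)"
      using e comp_smr[OF hs(1) hs(3)] by simp
    show "cComp (TP L) (cSmul (TP L) a g) f = cSmul (TP L) a (cComp (TP L) g f)"
      using e comp_sml[OF hs(1) hs(3)] by simp
  qed
qed

end

lemma int_bounds: "finite (B::int set) \<Longrightarrow> \<exists>lo hi. lo \<le> hi \<and> (\<forall>p\<in>B. lo < p \<and> p \<le> hi)"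
proof -
  assume B: "finite B"
  define lo where "lo = Min (insert 0 B) - 1"
  define hi where "hi = Max (insert 0 B)"
  have m1: "Min (insert 0 B) \<le> 0" by (rule Min_le) (use B in auto)
  have m2: "0 \<le> Max (insert 0 B)" by (rule Max_ge) (use B in auto)
  have "lo \<le> hi" unfolding lo_def hi_def using m1 m2 by simp
  moreover have "\<forall>p\<in>B. lo < p \<and> p \<le> hi"
  proof
    fix p assume p: "p \<in> B"
    have "Min (insert 0 B) \<le> p" by (rule Min_le) (use B p in auto)
    moreover have "p \<le> Max (insert 0 B)" by (rule Max_ge) (use B p in auto)
    ultimately show "lo < p \<and> p \<le> hi" unfolding lo_def hi_def by simp
  qed
  ultimately show ?thesis by blast
qed

context prelin
begin

lemma iso_char: "f \<in> H X Y \<Longrightarrow> is_iso D f \<longleftrightarrow> (\<exists>g\<in>H Y X. cmp g f = idm X \<and> cmp f g = idm Y)"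
  unfolding is_iso_def using hom_mor hom_dom hom_cod by metis

lemma transfer:
  assumes x: "x \<in> H U V" and EU: "EU \<in> H U U" and EV: "EV \<in> H V V" and c: "cmp EV x = cmp x EU"
    and kU: "kU \<in> H KU U" "rU \<in> H U KU" "cmp rU kU = idm KU" "cmp kU rU = EU"
    and kV: "kV \<in> H KV V" "rV \<in> H V KV" "cmp rV kV = idm KV" "cmp kV rV = EV"
  shows "cmp rV (cmp x kU) \<in> H KU KV"
    "cmp kV (cmp rV (cmp x kU)) = cmp x kU"
    "cmp rV x = cmp (cmp rV (cmp x kU)) rU"
    "is_iso D x \<Longrightarrow> is_iso D (cmp rV (cmp x kU))"
proof -
  define a where "a = cmp rV (cmp x kU)"
  have xk: "cmp x kU \<in> H KU V" using comp_hom[OF kU(1) x] .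
  show aH: "cmp rV (cmp x kU) \<in> H KU KV" using comp_hom[OF xk kV(2)] .
  have EUk: "cmp EU kU = kU" using split_facts[OF kU] by simp
  have rVE: "cmp rV EV = rV" using split_facts[OF kV] by simp
  have EVk: "cmp EV kV = kV" using split_facts[OF kV] by simp
  have two: "cmp kV (cmp rV (cmp x kU)) = cmp x kU"
  proof -
    have "cmp kV (cmp rV (cmp x kU)) = cmp (cmp kV rV) (cmp x kU)" using assoc[OF xk kV(2) kV(1)] by simp
    also have "\<dots> = cmp EV (cmp x kU)" using kV(4) by simp
    also have "\<dots> = cmp (cmp EV x) kU" using assoc[OF kU(1) x EV] by simp
    also have "\<dots> = cmp (cmp x EU) kU" using c by simp
    also have "\<dots> = cmp x (cmp EU kU)" using assoc[OF kU(1) EU x] by simp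
    also have "\<dots> = cmp x kU" using EUk by simp
    finally show ?thesis .
  qed
  then show "cmp kV (cmp rV (cmp x kU)) = cmp x kU" .
  show "cmp rV x = cmp (cmp rV (cmp x kU)) rU"
  proof -
    have "cmp (cmp rV (cmp x kU)) rU = cmp rV (cmp (cmp x kU) rU)" using assoc[OF kU(2) xk kV(2)] by simp
    also have "\<dots> = cmp rV (cmp x (cmp kU rU))" using assoc[OF kU(2) kU(1) x] by simp
    also have "\<dots> = cmp rV (cmp x EU)" using kU(4) by simp
    also have "\<dots> = cmp rV (cmp EV x)" using c by simp
    also have "\<dots> = cmp (cmp rV EV) x" using assoc[OF x EV kV(2)] by simp
    also have "\<dots> = cmp rV x" using rVE by simp
    finally show ?thesis by simp
  qed
  assume iso: "is_iso D x"
  then obtain y where y: "y \<in> H V U" "cmp y x = idm U" "cmp x y = idm V" using iso_char[OF x] by blast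
  have EUy: "cmp EU y = cmp y EV"
  proof -
    have yE: "cmp EU y \<in> H V U" using comp_hom[OF y(1) EU] .
    have "cmp EU y = cmp (cmp y x) (cmp EU y)" using y(2) id_l[OF yE] by simp
    also have "\<dots> = cmp y (cmp x (cmp EU y))" using assoc[OF yE x y(1)] by simp
    also have "\<dots> = cmp y (cmp (cmp x EU) y)" using assoc[OF y(1) EU x] by simp
    also have "\<dots> = cmp y (cmp (cmp EV x) y)" using c by simp
    also have "\<dots> = cmp y (cmp EV (cmp x y))" using assoc[OF y(1) x EV] by simp
    also have "\<dots> = cmp y EV" using y(3) id_r[OF EV] by simp
    finally show ?thesis .
  qed
  define b where "b = cmp rU (cmp y kV)"
  have yk: "cmp y kV \<in> H KV U" using comp_hom[OF kV(1) y(1)] .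
  have bH: "b \<in> H KV KU" unfolding b_def using comp_hom[OF yk kU(2)] .
  have ba: "cmp b a = idm KU"
  proof -
    have aH': "a \<in> H KU KV" using aH a_def by simp
    have "cmp b a = cmp rU (cmp (cmp y kV) a)" unfolding b_def using assoc[OF aH' yk kU(2)] by simp
    also have "\<dots> = cmp rU (cmp y (cmp kV a))" using assoc[OF aH' kV(1) y(1)] by simp
    also have "\<dots> = cmp rU (cmp y (cmp x kU))" using two a_def by simp
    also have "\<dots> = cmp rU (cmp (cmp y x) kU)" using assoc[OF kU(1) x y(1)] by simp
    also have "\<dots> = idm KU" using y(2) id_l[OF kU(1)] kU(3) by simp
    finally show ?thesis .
  qed
  have kUb: "cmp kU b = cmp y kV"
  proof -
    have "cmp kU b = cmp (cmp kU rU) (cmp y kV)" unfolding b_def using assoc[OF yk kU(2) kU(1)] by simp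
    also have "\<dots> = cmp (cmp EU y) kV" using kU(4) assoc[OF kV(1) y(1) EU] by simp
    also have "\<dots> = cmp y (cmp EV kV)" using EUy assoc[OF kV(1) EV y(1)] by simp
    also have "\<dots> = cmp y kV" using EVk by simp
    finally show ?thesis .
  qed
  have ab: "cmp a b = idm KV"
  proof -
    have "cmp a b = cmp rV (cmp (cmp x kU) b)" unfolding a_def using assoc[OF bH xk kV(2)] by simp
    also have "\<dots> = cmp rV (cmp x (cmp kU b))" using assoc[OF bH kU(1) x] by simp
    also have "\<dots> = cmp rV (cmp (cmp x y) kV)" using kUb assoc[OF kV(1) y(1) x] by simp
    also have "\<dots> = idm KV" using y(3) id_l[OF kV(1)] kV(3) by simp
    finally show ?thesis .
  qed
  show "is_iso D (cmp rV (cmp x kU))" using iso_char[OF aH] bH ba ab a_def by blast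
qed

lemma cancel_r: assumes x: "x \<in> H U V" "is_iso D x" and g: "g \<in> H V W" and z: "cmp g x = zr U W"
  shows "g = zr V W"
proof -
  obtain y where y: "y \<in> H V U" "cmp y x = idm U" "cmp x y = idm V" using iso_char[OF x(1)] x(2) by blast
  have "g = cmp g (cmp x y)" using y(3) g by simp
  also have "\<dots> = cmp (cmp g x) y" using assoc[OF y(1) x(1) g] by simp
  also have "\<dots> = zr V W" using z comp_zr_l[OF y(1) hom_ob2[OF g]] by simp
  finally show ?thesis .
qed

lemma cancel_l: assumes y: "y \<in> H W' W" "is_iso D y" and g: "g \<in> H U W'" and z: "cmp y g = zr U W"
  shows "g = zr U W'"
proof -
  obtain yi where yi: "yi \<in> H W W'" "cmp yi y = idm W'" "cmp y yi = idm W" using iso_char[OF y(1)] y(2) by blast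
  have "g = cmp (cmp yi y) g" using yi(2) g by simp
  also have "\<dots> = cmp yi (cmp y g)" using assoc[OF g y(1) yi(1)] by simp
  also have "\<dots> = zr U W'" using z comp_zr_r[OF yi(1) hom_ob1[OF g]] by simp
  finally show ?thesis .
qed

lemma step_up:
  assumes P: "pers_obj D L P" and Q: "pers_obj D L Q" and g: "pers_mor D L P Q g"
    and i: "is_iso D (snd P p)" "is_iso D (snd Q p)" and z: "g (p - 1) = zr (fst P (p - 1)) (fst Q (p - 1))"
  shows "g p = zr (fst P p) (fst Q p)"
proof (cases "p \<in> L")
  case True
  have "cmp (snd Q p) (g p) = zr (fst P p) (fst Q (p - 1))"
    using pmor_L[OF g True] z comp_zr_l[OF pobj_L[OF P True] pobj_ob[OF Q]] by simp
  then show ?thesis using cancel_l[OF pobj_L[OF Q True] i(2) pmor_hom[OF g]] by blast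
next
  case False
  have "cmp (g p) (snd P p) = zr (fst P (p - 1)) (fst Q p)"
    using pmor_nL[OF g False] z comp_zr_r[OF pobj_nL[OF Q False] pobj_ob[OF P]] by simp
  then show ?thesis using cancel_r[OF pobj_nL[OF P False] i(1) pmor_hom[OF g]] by blast
qed

lemma step_down:
  assumes P: "pers_obj D L P" and Q: "pers_obj D L Q" and g: "pers_mor D L P Q g"
    and i: "is_iso D (snd P p)" "is_iso D (snd Q p)" and z: "g p = zr (fst P p) (fst Q p)"
  shows "g (p - 1) = zr (fst P (p - 1)) (fst Q (p - 1))"
proof (cases "p \<in> L")
  case True
  have "cmp (g (p - 1)) (snd P p) = zr (fst P p) (fst Q (p - 1))"
    using pmor_L[OF g True] z comp_zr_r[OF pobj_L[OF Q True] pobj_ob[OF P]] by simp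
  then show ?thesis using cancel_r[OF pobj_L[OF P True] i(1) pmor_hom[OF g]] by blast
next
  case False
  have "cmp (snd Q p) (g (p - 1)) = zr (fst P (p - 1)) (fst Q p)"
    using pmor_nL[OF g False] z comp_zr_l[OF pobj_nL[OF P False] pobj_ob[OF Q]] by simp
  then show ?thesis using cancel_l[OF pobj_nL[OF Q False] i(2) pmor_hom[OF g]] by blast
qed

lemma propagate:
  assumes P: "pers_obj D L P" and Q: "pers_obj D L Q" and g: "pers_mor D L P Q g"
    and lh: "lo \<le> hi" and iso: "\<And>p. p \<le> lo \<or> hi < p \<Longrightarrow> is_iso D (snd P p) \<and> is_iso D (snd Q p)"
    and z: "\<And>p. lo \<le> p \<Longrightarrow> p \<le> hi \<Longrightarrow> g p = zr (fst P p) (fst Q p)"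
  shows "g p = zr (fst P p) (fst Q p)"
proof -
  have up: "g (hi + int n) = zr (fst P (hi + int n)) (fst Q (hi + int n))" for n
  proof (induction n)
    case 0 then show ?case using z[of hi] lh by simp
  next
    case (Suc n)
    have e: "hi + int (Suc n) - 1 = hi + int n" by simp
    have "is_iso D (snd P (hi + int (Suc n))) \<and> is_iso D (snd Q (hi + int (Suc n)))" using iso by simp
    then show ?case using step_up[OF P Q g, of "hi + int (Suc n)"] Suc e by simp
  qed
  have down: "g (lo - int n) = zr (fst P (lo - int n)) (fst Q (lo - int n))" for n
  proof (induction n)
    case 0 then show ?case using z[of lo] lh by simp
  next
    case (Suc n)
    have e: "lo - int n - 1 = lo - int (Suc n)" by simp
    have "is_iso D (snd P (lo - int n)) \<and> is_iso D (snd Q (lo - int n))" using iso by simp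
    then show ?case using step_down[OF P Q g, of "lo - int n"] Suc e by simp
  qed
  show ?thesis
  proof (cases "hi < p")
    case True
    then have "p = hi + int (nat (p - hi))" by simp
    then show ?thesis using up[of "nat (p - hi)"] by simp
  next
    case False
    show ?thesis
    proof (cases "p < lo")
      case True
      then have "p = lo - int (nat (lo - p))" by simp
      then show ?thesis using down[of "nat (lo - p)"] by simp
    next
      case False
      then show ?thesis using z \<open>\<not> hi < p\<close> by simp
    qed
  qed
qed

lemma temp_bounds:
  assumes "tempered D P" "tempered D Q"
  shows "\<exists>lo hi. lo \<le> hi \<and> (\<forall>p. p \<le> lo \<or> hi < p \<longrightarrow> is_iso D (snd P p) \<and> is_iso D (snd Q p))"
proof -
  have "finite ({p. \<not> is_iso D (snd P p)} \<union> {p. \<not> is_iso D (snd Q p)})"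
    using assms unfolding tempered_def by simp
  from int_bounds[OF this] obtain lo hi where lh: "lo \<le> hi" and
    bnd: "\<forall>p\<in>{p. \<not> is_iso D (snd P p)} \<union> {p. \<not> is_iso D (snd Q p)}. lo < p \<and> p \<le> hi" by blast
  have "\<forall>p. p \<le> lo \<or> hi < p \<longrightarrow> is_iso D (snd P p) \<and> is_iso D (snd Q p)"
  proof (intro allI impI)
    fix p assume "p \<le> lo \<or> hi < p"
    then have "p \<notin> {p. \<not> is_iso D (snd P p)} \<union> {p. \<not> is_iso D (snd Q p)}"
    proof -
      assume a: "p \<le> lo \<or> hi < p"
      show ?thesis
      proof
        assume "p \<in> {p. \<not> is_iso D (snd P p)} \<union> {p. \<not> is_iso D (snd Q p)}"
        then have "lo < p \<and> p \<le> hi" using bnd by blast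
        with a show False by simp
      qed
    qed
    then show "is_iso D (snd P p) \<and> is_iso D (snd Q p)" by simp
  qed
  then show ?thesis using lh by blast
qed

lemma pevalT:
  assumes X: "X \<in> cObj (TP L)" and f: "pers_mor D L X X F"
  shows "peval (TP L) X q (X, X, F) = (X, X, \<lambda>p. peval D (fst X p) q (F p))"
proof -
  interpret T: prelin "TP L" by (rule prelinT)
  have fH: "(X, X, F) \<in> hom (TP L) X X" using X f by (auto simp: homT)
  have PX: "pers_obj D L X" using X by simp
  show ?thesis
  proof (induction q)
    case 0 then show ?case by simp
  next
    case (pCons a q)
    show ?case using T.peval_pCons[OF X fH] pCons
      by (simp add: peval_pCons[OF pobj_ob[OF PX] pmor_hom[OF f]])
  qed
qed

end

context fdcat
begin

lemma idem_splitT: "idem_split (TP L)"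
  unfolding idem_split_def
proof (intro ballI impI)
  fix X e assume X: "X \<in> cObj (TP L)" and eH: "e \<in> hom (TP L) X X" and ee: "cComp (TP L) e e = e"
  obtain E where e: "e = (X, X, E)" and Em: "pers_mor D L X X E" using eH by (auto simp: homT)
  have PX: "pers_obj D L X" and TX: "tempered D X" using X by auto
  have "(\<lambda>p. cmp (E p) (E p)) = E" using ee e by simp
  then have EE: "cmp (E p) (E p) = E p" for p by (simp add: fun_eq_iff)
  have "\<forall>p. \<exists>t. fst t \<in> Ob \<and> fst (snd t) \<in> H (fst t) (fst X p) \<and> snd (snd t) \<in> H (fst X p) (fst t) \<and>
      cmp (snd (snd t)) (fst (snd t)) = idm (fst t) \<and> cmp (fst (snd t)) (snd (snd t)) = E p"
  proof
    fix p
    obtain A \<iota> \<pi> where "A \<in> Ob" "\<iota> \<in> H A (fst X p)" "\<pi> \<in> H (fst X p) A" "cmp \<pi> \<iota> = idm A" "cmp \<iota> \<pi> = E p"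
      using split_C[OF pobj_ob[OF PX] pmor_hom[OF Em] EE] by blast
    then show "\<exists>t. fst t \<in> Ob \<and> fst (snd t) \<in> H (fst t) (fst X p) \<and> snd (snd t) \<in> H (fst X p) (fst t) \<and>
      cmp (snd (snd t)) (fst (snd t)) = idm (fst t) \<and> cmp (fst (snd t)) (snd (snd t)) = E p"
      by (intro exI[of _ "(A, \<iota>, \<pi>)"]) simp
  qed
  from choice[OF this] obtain t where t: "\<forall>p. fst (t p) \<in> Ob \<and> fst (snd (t p)) \<in> H (fst (t p)) (fst X p) \<and>
      snd (snd (t p)) \<in> H (fst X p) (fst (t p)) \<and>
      cmp (snd (snd (t p))) (fst (snd (t p))) = idm (fst (t p)) \<and> cmp (fst (snd (t p))) (snd (snd (t p))) = E p"
    by blast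
  define K where "K p = fst (t p)" for p
  define k where "k p = fst (snd (t p))" for p
  define r where "r p = snd (snd (t p))" for p
  have S: "K p \<in> Ob" "k p \<in> H (K p) (fst X p)" "r p \<in> H (fst X p) (K p)" "cmp (r p) (k p) = idm (K p)"
    "cmp (k p) (r p) = E p" for p
    using t unfolding K_def k_def r_def by auto
  define a where "a p = (if p \<in> L then cmp (r (p - 1)) (cmp (snd X p) (k p)) else cmp (r p) (cmp (snd X p) (k (p - 1))))" for p
  note trL = transfer[OF pobj_L[OF PX] pmor_hom[OF Em] pmor_hom[OF Em] pmor_L[OF Em] S(2-5) S(2-5)]
  note trnL = transfer[OF pobj_nL[OF PX] pmor_hom[OF Em] pmor_hom[OF Em] pmor_nL[OF Em] S(2-5) S(2-5)]
  define A where "A = (K, a)"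
  have aL: "p \<in> L \<Longrightarrow> a p \<in> H (K p) (K (p - 1)) \<and> cmp (k (p - 1)) (a p) = cmp (snd X p) (k p) \<and>
      cmp (r (p - 1)) (snd X p) = cmp (a p) (r p) \<and> (is_iso D (snd X p) \<longrightarrow> is_iso D (a p))" for p
    using trL[of p] unfolding a_def by simp
  have anL: "p \<notin> L \<Longrightarrow> a p \<in> H (K (p - 1)) (K p) \<and> cmp (k p) (a p) = cmp (snd X p) (k (p - 1)) \<and>
      cmp (r p) (snd X p) = cmp (a p) (r (p - 1)) \<and> (is_iso D (snd X p) \<longrightarrow> is_iso D (a p))" for p
    using trnL[of p] unfolding a_def by simp
  have PA: "pers_obj D L A" unfolding pers_obj_def A_def using S(1) aL anL by auto
  have "{p. \<not> is_iso D (a p)} \<subseteq> {p. \<not> is_iso D (snd X p)}" using aL anL by blast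
  then have TA: "tempered D A" using TX unfolding tempered_def A_def by (auto intro: finite_subset)
  have kM: "pers_mor D L A X k"
    by (rule pmorI) (use S(2) aL anL in \<open>auto simp: A_def\<close>)
  have rM: "pers_mor D L X A r"
    by (rule pmorI) (use S(3) aL anL in \<open>auto simp: A_def\<close>)
  have AT: "A \<in> cObj (TP L)" using PA TA by simp
  have c1: "cComp (TP L) (X, A, r) (A, X, k) = cId (TP L) A" using S(4) by (simp add: A_def)
  have c2: "cComp (TP L) (A, X, k) (X, A, r) = e" using S(5) e by (simp add: fun_eq_iff)
  show "\<exists>A' \<iota> \<pi>. A' \<in> cObj (TP L) \<and> \<iota> \<in> hom (TP L) A' X \<and> \<pi> \<in> hom (TP L) X A' \<and>
      cComp (TP L) \<pi> \<iota> = cId (TP L) A' \<and> cComp (TP L) \<iota> \<pi> = e"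
    by (rule exI[of _ A], rule exI[of _ "(A, X, k)"], rule exI[of _ "(X, A, r)"])
      (use AT X kM rM c1 c2 in \<open>simp add: homT\<close>)
qed

lemma oidem_boundedT: "oidem_bounded (TP L)"
  unfolding oidem_bounded_def
proof
  fix X assume X: "X \<in> cObj (TP L)"
  have PX: "pers_obj D L X" and TX: "tempered D X" using X by auto
  obtain lo hi where lh: "lo \<le> hi" and iso: "\<forall>p. p \<le> lo \<or> hi < p \<longrightarrow> is_iso D (snd X p) \<and> is_iso D (snd X p)"
    using temp_bounds[OF TX TX] by blast
  have "\<forall>p. \<exists>N. \<forall>K e. finite K \<longrightarrow> oidem D (fst X p) K e \<longrightarrow> card K \<le> N"
    using oidem_bounded_C pobj_ob[OF PX] unfolding oidem_bounded_def by blast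
  from choice[OF this] obtain Nf where Nf: "\<forall>p. \<forall>K e. finite K \<longrightarrow> oidem D (fst X p) K e \<longrightarrow> card K \<le> Nf p"
    by blast
  have "card K \<le> (\<Sum>p\<in>{lo..hi}. Nf p)" if K: "finite K" and oe: "oidem (TP L) X K e" for K e
  proof -
    define E where "E k = snd (snd (e k))" for k
    have ek: "e k = (X, X, E k)" "pers_mor D L X X (E k)" if "k \<in> K" for k
      using oe that unfolding oidem_def E_def by (auto simp: homT)
    have EI: "cmp (E k p) (E k p) = E k p" if "k \<in> K" for k p
    proof -
      have "cComp (TP L) (e k) (e k) = e k" using oe that unfolding oidem_def by blast
      then have "(\<lambda>p. cmp (E k p) (E k p)) = E k" using ek[OF that] by simp
      then show ?thesis by (simp add: fun_eq_iff)
    qed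
    have EO: "cmp (E j p) (E k p) = zr (fst X p) (fst X p)" if "j \<in> K" "k \<in> K" "j \<noteq> k" for j k p
    proof -
      have "cComp (TP L) (e j) (e k) = cZero (TP L) X X" using oe that unfolding oidem_def by blast
      then have "(\<lambda>p. cmp (E j p) (E k p)) = (\<lambda>p. zr (fst X p) (fst X p))" using ek that by simp
      then show ?thesis by (simp add: fun_eq_iff)
    qed
    have EN: "\<exists>p\<in>{lo..hi}. E k p \<noteq> zr (fst X p) (fst X p)" if k: "k \<in> K" for k
    proof (rule ccontr)
      assume "\<not> (\<exists>p\<in>{lo..hi}. E k p \<noteq> zr (fst X p) (fst X p))"
      then have z: "\<And>p. lo \<le> p \<Longrightarrow> p \<le> hi \<Longrightarrow> E k p = zr (fst X p) (fst X p)" by auto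
      have "E k p = zr (fst X p) (fst X p)" for p
        by (rule propagate[OF PX PX ek(2)[OF k] lh]) (use iso z in auto)
      then have "e k = cZero (TP L) X X" using ek[OF k] by (simp add: fun_eq_iff)
      with oe k show False unfolding oidem_def by blast
    qed
    define Kp where "Kp p = {k \<in> K. E k p \<noteq> zr (fst X p) (fst X p)}" for p
    have Kpf: "finite (Kp p)" for p using K unfolding Kp_def by simp
    have EH: "E k p \<in> H (fst X p) (fst X p)" if "k \<in> K" for k p using pmor_hom[OF ek(2)[OF that]] .
    have "oidem D (fst X p) (Kp p) (\<lambda>k. E k p)" for p
      unfolding oidem_def Kp_def using EH EI EO by auto
    then have cK: "card (Kp p) \<le> Nf p" for p using Nf Kpf by blast
    have "K \<subseteq> (\<Union>p\<in>{lo..hi}. Kp p)" using EN unfolding Kp_def by blast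
    then have "card K \<le> card (\<Union>p\<in>{lo..hi}. Kp p)" by (rule card_mono[rotated]) (use Kpf in simp)
    also have "\<dots> \<le> (\<Sum>p\<in>{lo..hi}. card (Kp p))" by (rule card_UN_le) simp
    also have "\<dots> \<le> (\<Sum>p\<in>{lo..hi}. Nf p)" by (rule sum_mono) (use cK in simp)
    finally show ?thesis .
  qed
  then show "\<exists>N. \<forall>K e. finite K \<longrightarrow> oidem (TP L) X K e \<longrightarrow> card K \<le> N" by blast
qed

lemma poly_annihT: "poly_annih (TP L)"
  unfolding poly_annih_def
proof (intro ballI)
  fix X f assume X: "X \<in> cObj (TP L)" and fH: "f \<in> hom (TP L) X X"
  interpret T: prelin "TP L" by (rule prelinT)
  obtain F where f: "f = (X, X, F)" and Fm: "pers_mor D L X X F" using fH by (auto simp: homT)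
  have PX: "pers_obj D L X" and TX: "tempered D X" using X by auto
  obtain lo hi where lh: "lo \<le> hi" and iso: "\<forall>p. p \<le> lo \<or> hi < p \<longrightarrow> is_iso D (snd X p) \<and> is_iso D (snd X p)"
    using temp_bounds[OF TX TX] by blast
  have "\<forall>p. \<exists>P. P \<noteq> 0 \<and> peval D (fst X p) P (F p) = zr (fst X p) (fst X p)"
    using poly_annih_C pobj_ob[OF PX] pmor_hom[OF Fm] unfolding poly_annih_def by blast
  from choice[OF this] obtain Pf where Pf: "\<forall>p. Pf p \<noteq> 0 \<and> peval D (fst X p) (Pf p) (F p) = zr (fst X p) (fst X p)"
    by blast
  define P where "P = (\<Prod>p\<in>{lo..hi}. Pf p)"
  have Pnz: "P \<noteq> 0" unfolding P_def using Pf by (simp add: prod_zero_iff)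
  have zin: "peval D (fst X p) P (F p) = zr (fst X p) (fst X p)" if "lo \<le> p" "p \<le> hi" for p
  proof -
    have Xp: "fst X p \<in> Ob" using pobj_ob[OF PX] .
    have "P = Pf p * (\<Prod>q\<in>{lo..hi} - {p}. Pf q)" unfolding P_def using that by (simp add: prod.remove)
    then have "peval D (fst X p) P (F p) = cmp (zr (fst X p) (fst X p)) (peval D (fst X p) (\<Prod>q\<in>{lo..hi} - {p}. Pf q) (F p))"
      using Pf peval_mult[OF Xp pmor_hom[OF Fm]] by simp
    also have "\<dots> = zr (fst X p) (fst X p)" using comp_zr_l[OF peval_hom[OF Xp pmor_hom[OF Fm]] Xp] by simp
    finally show ?thesis .
  qed
  have "peval (TP L) X P f \<in> hom (TP L) X X" using T.peval_hom[OF X fH] .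
  then have pm: "pers_mor D L X X (\<lambda>p. peval D (fst X p) P (F p))"
    using pevalT[OF X Fm] f by (auto simp: homT)
  have zall: "peval D (fst X p) P (F p) = zr (fst X p) (fst X p)" for p
    by (rule propagate[OF PX PX pm lh]) (use iso zin in auto)
  have "peval (TP L) X P f = cZero (TP L) X X"
    using pevalT[OF X Fm] f zall by (simp add: fun_eq_iff)
  then show "\<exists>P. P \<noteq> 0 \<and> peval (TP L) X P f = cZero (TP L) X X" using Pnz by blast
qed

end

theorem proposition5p2:
  fixes C :: "('o, 'm, 'k::field) lcat" and L :: "int set"
  assumes "linear_abelian_cat C"
  shows "krull_schmidt (tempered_pers_cat C L)"
proof -
  interpret C: fdcat C
  proof -
    have "prelin C" using lac_prelin[OF assms] .
    moreover have "linear_homs C" "\<forall>f\<in>cMor C. \<exists>k. is_kernel C f k"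
      using assms unfolding linear_abelian_cat_def by auto
    ultimately show "fdcat C" unfolding fdcat_def fdcat_axioms_def by blast
  qed
  interpret T: prelin "tempered_pers_cat C L" by (rule C.prelinT)
  show ?thesis by (rule T.KS_abstract[OF C.idem_splitT C.oidem_boundedT C.poly_annihT])
qed

end
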